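(* If TDS is undecidable, then the reachability problem of one-dimensional piecewise affine maps is undecidable.
   Context: An instance of TDS consists of a rational discount factor $0<\lambda<1$, a rational target $t$, and rational weights $a,b$; it asks whether there exists $w\in\{a,b\}^\omega$ with $\sum_{i=0}^\infty w(i)\lambda^i=t$. A one-dimensional piecewise affine map is a function $f:\mathbb R\to\mathbb R$ whose domain is partitioned into finitely many disjoint intervals (sections, with rational endpoints), such that on the $i$-th section $f(x)=a_ix+b_i$ with rational $a_i\neq 0$ and rational $b_i$. The reachability problem asks, given such $f$ and rational points $s,t$, whether there exists $n\in\mathbb N$ with $f^n(s)=t$. *)

theory Defs
  imports Complex_Main "HOL-Library.Nat_Bijection"
begin

datatype recf = Zf | Sf | Proj nat | Cn recf "recf list" | Pr recf recf | Mn recf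

inductive rec_eval :: "recf \<Rightarrow> nat list \<Rightarrow> nat \<Rightarrow> bool" where
  zero: "rec_eval Zf xs 0"
| succ: "rec_eval Sf (x # xs) (Suc x)"
| proj: "i < length xs \<Longrightarrow> rec_eval (Proj i) xs (xs ! i)"
| comp: "list_all2 (\<lambda>f y. rec_eval f xs y) fs ys \<Longrightarrow> rec_eval g ys z
          \<Longrightarrow> rec_eval (Cn g fs) xs z"
| prim0: "rec_eval f xs y \<Longrightarrow> rec_eval (Pr f g) (0 # xs) y"
| primS: "rec_eval (Pr f g) (n # xs) y \<Longrightarrow> rec_eval g (n # y # xs) z
          \<Longrightarrow> rec_eval (Pr f g) (Suc n # xs) z"
| mu: "rec_eval f (n # xs) 0 \<Longrightarrow> (\<forall>m<n. \<exists>k. rec_eval f (m # xs) (Suc k))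
          \<Longrightarrow> rec_eval (Mn f) xs n"

definition decidable :: "nat set \<Rightarrow> bool" where
  "decidable A \<longleftrightarrow> (\<exists>p. \<forall>n. rec_eval p [n] (if n \<in> A then 1 else 0))"

definition rat_code :: "rat \<Rightarrow> nat" where
  "rat_code q = prod_encode (int_encode (fst (quotient_of q)), int_encode (snd (quotient_of q)))"

definition tds_code :: "rat \<Rightarrow> rat \<Rightarrow> rat \<Rightarrow> rat \<Rightarrow> nat" where
  "tds_code l t a b = list_encode (map rat_code [l, t, a, b])"

definition tds_yes :: "rat \<Rightarrow> rat \<Rightarrow> rat \<Rightarrow> rat \<Rightarrow> bool" where
  "tds_yes l t a b \<longleftrightarrow> 0 < l \<and> l < 1 \<and>
     (\<exists>w :: nat \<Rightarrow> real. (\<forall>i. w i \<in> {of_rat a, of_rat b}) \<and>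
        (\<lambda>i. w i * (of_rat l) ^ i) sums (of_rat t))"

definition TDS :: "nat set" where
  "TDS = {tds_code l t a b | l t a b. tds_yes l t a b}"

text \<open>An interval endpoint: None = unbounded; Some (q, True) = closed at q;
  Some (q, False) = open at q.  A section is (lower, upper, a_i, b_i).\<close>
type_synonym bound = "(rat \<times> bool) option"
type_synonym pam_section = "bound \<times> bound \<times> rat \<times> rat"

fun above_lo :: "bound \<Rightarrow> real \<Rightarrow> bool" where
  "above_lo None x = True"
| "above_lo (Some (q, c)) x = (if c then of_rat q \<le> x else of_rat q < x)"

fun below_hi :: "bound \<Rightarrow> real \<Rightarrow> bool" where
  "below_hi None x = True"
| "below_hi (Some (q, c)) x = (if c then x \<le> of_rat q else x < of_rat q)"

definition sec_set :: "pam_section \<Rightarrow> real set" where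
  "sec_set s = {x. above_lo (fst s) x \<and> below_hi (fst (snd s)) x}"

definition pam_valid :: "pam_section list \<Rightarrow> bool" where
  "pam_valid secs \<longleftrightarrow>
     (\<forall>i<length secs. \<forall>j<length secs. i \<noteq> j \<longrightarrow> sec_set (secs!i) \<inter> sec_set (secs!j) = {}) \<and>
     (\<Union>s\<in>set secs. sec_set s) = UNIV \<and>
     (\<forall>s\<in>set secs. fst (snd (snd s)) \<noteq> 0)"

definition pam_apply :: "pam_section list \<Rightarrow> real \<Rightarrow> real" where
  "pam_apply secs x =
     (case find (\<lambda>s. x \<in> sec_set s) secs of
        None \<Rightarrow> x
      | Some s \<Rightarrow> of_rat (fst (snd (snd s))) * x + of_rat (snd (snd (snd s))))"

fun bound_code :: "bound \<Rightarrow> nat" where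
  "bound_code None = 0"
| "bound_code (Some (q, c)) = Suc (prod_encode (rat_code q, if c then 1 else 0))"

definition sec_code :: "pam_section \<Rightarrow> nat" where
  "sec_code s = (case s of (lo, hi, a, b) \<Rightarrow>
      list_encode [bound_code lo, bound_code hi, rat_code a, rat_code b])"

definition reach_code :: "pam_section list \<Rightarrow> rat \<Rightarrow> rat \<Rightarrow> nat" where
  "reach_code secs s t = prod_encode (list_encode (map sec_code secs), prod_encode (rat_code s, rat_code t))"

definition PAM_REACH :: "nat set" where
  "PAM_REACH = {reach_code secs s t | secs s t. pam_valid secs \<and>
      (\<exists>n. (pam_apply secs ^^ n) (of_rat s) = of_rat t)}"

end

theory Submission
  imports Defs
begin

definition rcf :: "nat \<Rightarrow> (nat list \<Rightarrow> nat) \<Rightarrow> bool" where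
  "rcf k F \<longleftrightarrow> (\<exists>f. \<forall>xs. length xs = k \<longrightarrow> rec_eval f xs (F xs))"

lemma rcf_cong: "rcf k F \<Longrightarrow> (\<And>xs. length xs = k \<Longrightarrow> F xs = G xs) \<Longrightarrow> rcf k G"
  unfolding rcf_def by metis

lemma list_choice: "(\<forall>x\<in>set xs. \<exists>y. Q x y) \<Longrightarrow> \<exists>ys. list_all2 Q xs ys"
proof (induction xs)
  case Nil then show ?case by auto
next
  case (Cons a xs)
  then obtain ys where "list_all2 Q xs ys" by auto
  moreover obtain y where "Q a y" using Cons.prems by auto
  ultimately show ?case by (metis list_all2_Cons)
qed

lemma rcf_comp:
  assumes "rcf m H" "length Fs = m" "\<forall>F\<in>set Fs. rcf k F"
  shows "rcf k (\<lambda>xs. H (map (\<lambda>F. F xs) Fs))"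
proof -
  obtain h where h: "\<forall>xs. length xs = m \<longrightarrow> rec_eval h xs (H xs)" using assms(1) rcf_def by auto
  obtain fs where fs: "list_all2 (\<lambda>F f. \<forall>xs. length xs = k \<longrightarrow> rec_eval f xs (F xs)) Fs fs"
    using list_choice[of Fs "\<lambda>F f. \<forall>xs. length xs = k \<longrightarrow> rec_eval f xs (F xs)"] assms(3)
    unfolding rcf_def by auto
  have "rec_eval (Cn h fs) xs (H (map (\<lambda>F. F xs) Fs))" if "length xs = k" for xs
  proof (rule rec_eval.comp)
    show "list_all2 (\<lambda>f y. rec_eval f xs y) fs (map (\<lambda>F. F xs) Fs)"
      using fs that by (auto simp: list_all2_conv_all_nth)
    show "rec_eval h (map (\<lambda>F. F xs) Fs) (H (map (\<lambda>F. F xs) Fs))"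
      using h assms(2) by auto
  qed
  then show ?thesis unfolding rcf_def by blast
qed

fun prec :: "(nat list \<Rightarrow> nat) \<Rightarrow> (nat list \<Rightarrow> nat) \<Rightarrow> nat \<Rightarrow> nat list \<Rightarrow> nat" where
  "prec F G 0 ys = F ys"
| "prec F G (Suc n) ys = G (n # prec F G n ys # ys)"

lemma rcf_prec:
  assumes "rcf k F" "rcf (Suc (Suc k)) G"
  shows "rcf (Suc k) (\<lambda>xs. prec F G (hd xs) (tl xs))"
proof -
  obtain f where f: "\<forall>xs. length xs = k \<longrightarrow> rec_eval f xs (F xs)" using assms(1) rcf_def by auto
  obtain g where g: "\<forall>xs. length xs = Suc (Suc k) \<longrightarrow> rec_eval g xs (G xs)" using assms(2) rcf_def by auto
  have *: "rec_eval (Pr f g) (n # ys) (prec F G n ys)" if "length ys = k" for n ys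
  proof (induction n)
    case 0 then show ?case using f that by (auto intro: rec_eval.prim0)
  next
    case (Suc n) then show ?case using g that by (auto intro: rec_eval.primS)
  qed
  have "rec_eval (Pr f g) xs (prec F G (hd xs) (tl xs))" if "length xs = Suc k" for xs
    using *[of "tl xs" "hd xs"] that by (cases xs) auto
  then show ?thesis unfolding rcf_def by blast
qed

lemma rcf_zero: "rcf k (\<lambda>_. 0)"
  unfolding rcf_def by (auto intro: rec_eval.zero)

lemma rcf_proj: "i < k \<Longrightarrow> rcf k (\<lambda>xs. xs ! i)"
  unfolding rcf_def by (auto intro: rec_eval.proj)

lemma rcf_Suc1: "rcf 1 (\<lambda>xs. Suc (xs ! 0))"
  unfolding rcf_def by (rule exI[of _ Sf]) (auto simp: length_Suc_conv intro: rec_eval.succ)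

lemma rcf_comp1: "rcf 1 H \<Longrightarrow> rcf k F \<Longrightarrow> rcf k (\<lambda>xs. H [F xs])"
  using rcf_comp[of 1 H "[F]" k] by auto

lemma rcf_comp2: "rcf 2 H \<Longrightarrow> rcf k F \<Longrightarrow> rcf k G \<Longrightarrow> rcf k (\<lambda>xs. H [F xs, G xs])"
  using rcf_comp[of 2 H "[F,G]" k] by auto

lemma rcf_Suc: "rcf k F \<Longrightarrow> rcf k (\<lambda>xs. Suc (F xs))"
  using rcf_comp1[OF rcf_Suc1] by simp

lemma rcf_const: "rcf k (\<lambda>_. c)"
  by (induction c) (auto intro: rcf_zero rcf_Suc)

lemma rcf_add2: "rcf 2 (\<lambda>xs. xs ! 0 + xs ! 1)"
proof -
  have R: "rcf 2 (\<lambda>xs. prec (\<lambda>ys. ys ! 0) (\<lambda>zs. Suc (zs ! 1)) (hd xs) (tl xs))"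
    using rcf_prec[of 1 "\<lambda>ys. ys ! 0" "\<lambda>zs. Suc (zs ! 1)"]
    by (simp add: rcf_proj rcf_Suc numeral_2_eq_2)
  moreover have E: "prec (\<lambda>ys. ys ! 0) (\<lambda>zs. Suc (zs ! 1)) n ys = n + ys ! 0" for n ys
    by (induction n) auto
  show ?thesis
    by (rule rcf_cong[OF R]) (auto simp: length_Suc_conv numeral_2_eq_2 E[simplified numeral_2_eq_2 One_nat_def])
qed

lemma rcf_add: "rcf k F \<Longrightarrow> rcf k G \<Longrightarrow> rcf k (\<lambda>xs. F xs + G xs)"
  using rcf_comp2[OF rcf_add2] by simp

lemma rcf_mult2: "rcf 2 (\<lambda>xs. xs ! 0 * xs ! 1)"
proof -
  have R: "rcf 2 (\<lambda>xs. prec (\<lambda>ys. 0) (\<lambda>zs. zs ! 1 + zs ! 2) (hd xs) (tl xs))"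
    using rcf_prec[of 1 "\<lambda>ys. 0" "\<lambda>zs. zs ! 1 + zs ! 2"]
    by (simp add: rcf_proj rcf_add rcf_zero numeral_2_eq_2)
  moreover have E: "prec (\<lambda>ys. 0) (\<lambda>zs. zs ! 1 + zs ! 2) n ys = n * ys ! 0" for n ys
    by (induction n) auto
  show ?thesis
    by (rule rcf_cong[OF R]) (auto simp: length_Suc_conv numeral_2_eq_2 E[simplified numeral_2_eq_2 One_nat_def])
qed

lemma rcf_mult: "rcf k F \<Longrightarrow> rcf k G \<Longrightarrow> rcf k (\<lambda>xs. F xs * G xs)"
  using rcf_comp2[OF rcf_mult2] by simp

lemma rcf_pred1: "rcf 1 (\<lambda>xs. xs ! 0 - 1)"
proof -
  have R: "rcf 1 (\<lambda>xs. prec (\<lambda>ys. 0) (\<lambda>zs. zs ! 0) (hd xs) (tl xs))"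
    using rcf_prec[of 0 "\<lambda>ys. 0" "\<lambda>zs. zs ! 0"]
    by (simp add: rcf_proj rcf_zero)
  moreover have E: "prec (\<lambda>ys. 0) (\<lambda>zs. zs ! 0) n ys = n - 1" for n ys
    by (induction n) auto
  show ?thesis
    by (rule rcf_cong[OF R]) (auto simp: length_Suc_conv E)
qed

lemma rcf_pred: "rcf k F \<Longrightarrow> rcf k (\<lambda>xs. F xs - 1)"
  using rcf_comp1[OF rcf_pred1] by simp

lemma rcf_monus2: "rcf 2 (\<lambda>xs. xs ! 1 - xs ! 0)"
proof -
  have R: "rcf 2 (\<lambda>xs. prec (\<lambda>ys. ys ! 0) (\<lambda>zs. zs ! 1 - 1) (hd xs) (tl xs))"
    using rcf_prec[of 1 "\<lambda>ys. ys ! 0" "\<lambda>zs. zs ! 1 - 1", OF rcf_proj rcf_pred[OF rcf_proj]]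
    by (simp add: numeral_2_eq_2)
  moreover have E: "prec (\<lambda>ys. ys ! 0) (\<lambda>zs. zs ! 1 - 1) n ys = ys ! 0 - n" for n ys
    by (induction n) auto
  show ?thesis
    by (rule rcf_cong[OF R]) (auto simp: length_Suc_conv numeral_2_eq_2 E[simplified numeral_2_eq_2 One_nat_def])
qed

lemma rcf_sub: "rcf k F \<Longrightarrow> rcf k G \<Longrightarrow> rcf k (\<lambda>xs. F xs - G xs)"
  using rcf_comp2[OF rcf_monus2, of k G F] by simp

lemma drop2_map: "length zs = Suc (Suc k) \<Longrightarrow> map (\<lambda>j. zs ! Suc (Suc j)) [0..<k] = drop 2 zs"
  by (rule nth_equalityI) auto

lemma rcf_sum1:
  assumes "rcf (Suc k) P"
  shows "rcf (Suc k) (\<lambda>xs. \<Sum>i<hd xs. P (i # tl xs))"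
proof -
  let ?Fs = "(\<lambda>zs. zs ! 0) # map (\<lambda>j zs. zs ! Suc (Suc j)) [0..<k]"
  have "rcf (Suc (Suc k)) (\<lambda>zs. P (map (\<lambda>F. F zs) ?Fs))"
    by (rule rcf_comp[OF assms]) (auto intro: rcf_proj)
  then have A: "rcf (Suc (Suc k)) (\<lambda>zs. P (zs ! 0 # drop 2 zs))"
    by (rule rcf_cong) (simp add: comp_def drop2_map)
  have R: "rcf (Suc k) (\<lambda>xs. prec (\<lambda>_. 0) (\<lambda>zs. zs ! 1 + P (zs ! 0 # drop 2 zs)) (hd xs) (tl xs))"
    by (rule rcf_prec[OF rcf_zero]) (intro rcf_add rcf_proj A; simp)
  moreover have E: "prec (\<lambda>_. 0) (\<lambda>zs. zs ! 1 + P (zs ! 0 # drop 2 zs)) n ys = (\<Sum>i<n. P (i # ys))" for n ys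
    by (induction n) auto
  show ?thesis by (rule rcf_cong[OF R]) (simp add: E[simplified One_nat_def])
qed

lemma map_nth_k: "length xs = k \<Longrightarrow> map ((!) xs) [0..<k] = xs"
  by (rule nth_equalityI) auto

lemma rcf_sum:
  assumes "rcf k B" "rcf (Suc k) P"
  shows "rcf k (\<lambda>xs. \<Sum>i<B xs. P (i # xs))"
proof -
  let ?Fs = "B # map (\<lambda>j xs. xs ! j) [0..<k]"
  have "rcf k (\<lambda>xs. (\<lambda>ys. \<Sum>i<hd ys. P (i # tl ys)) (map (\<lambda>F. F xs) ?Fs))"
    by (rule rcf_comp[OF rcf_sum1[OF assms(2)]]) (auto intro: rcf_proj assms(1))
  then show ?thesis by (rule rcf_cong) (simp add: comp_def map_nth_k)
qed

definition rcp :: "nat \<Rightarrow> (nat list \<Rightarrow> bool) \<Rightarrow> bool" where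
  "rcp k P \<longleftrightarrow> rcf k (\<lambda>xs. if P xs then 1 else 0)"

lemma rcf_If:
  assumes "rcp k P" "rcf k F" "rcf k G"
  shows "rcf k (\<lambda>xs. if P xs then F xs else G xs)"
proof -
  have "rcf k (\<lambda>xs. F xs * (if P xs then 1 else 0) + G xs * (1 - (if P xs then 1 else 0)))"
    using assms unfolding rcp_def by (intro rcf_add rcf_mult rcf_sub rcf_const)
  then show ?thesis by (rule rcf_cong) simp
qed

lemma rcp_eq: assumes "rcf k F" "rcf k G" shows "rcp k (\<lambda>xs. F xs = G xs)"
proof -
  have "rcf k (\<lambda>xs. 1 - ((F xs - G xs) + (G xs - F xs)))" using assms unfolding rcp_def by (intro rcf_add rcf_sub rcf_const)
  then show ?thesis unfolding rcp_def by (rule rcf_cong) auto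
qed

lemma rcp_le: assumes "rcf k F" "rcf k G" shows "rcp k (\<lambda>xs. F xs \<le> G xs)"
proof -
  have "rcf k (\<lambda>xs. 1 - (F xs - G xs))" using assms unfolding rcp_def by (intro rcf_add rcf_sub rcf_const)
  then show ?thesis unfolding rcp_def by (rule rcf_cong) auto
qed

lemma rcp_less: assumes "rcf k F" "rcf k G" shows "rcp k (\<lambda>xs. F xs < G xs)"
proof -
  have "rcf k (\<lambda>xs. 1 - (Suc (F xs) - G xs))" using assms unfolding rcp_def by (intro rcf_add rcf_sub rcf_const rcf_Suc)
  then show ?thesis unfolding rcp_def by (rule rcf_cong) auto
qed

lemma rcp_and: assumes "rcp k P" "rcp k Q" shows "rcp k (\<lambda>xs. P xs \<and> Q xs)"
proof -
  have "rcf k (\<lambda>xs. (if P xs then 1 else 0) * (if Q xs then 1 else 0))" using assms unfolding rcp_def by (intro rcf_mult)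
  then show ?thesis unfolding rcp_def by (rule rcf_cong) auto
qed

lemma rcp_not: assumes "rcp k P" shows "rcp k (\<lambda>xs. \<not> P xs)"
proof -
  have "rcf k (\<lambda>xs. 1 - (if P xs then 1 else 0))" using assms unfolding rcp_def by (intro rcf_sub rcf_const)
  then show ?thesis unfolding rcp_def by (rule rcf_cong) auto
qed

lemma rcp_or: "rcp k P \<Longrightarrow> rcp k Q \<Longrightarrow> rcp k (\<lambda>xs. P xs \<or> Q xs)"
proof -
  assume "rcp k P" "rcp k Q"
  then have "rcp k (\<lambda>xs. \<not> (\<not> P xs \<and> \<not> Q xs))" by (intro rcp_not rcp_and)
  then show ?thesis by simp
qed

lemma rcp_imp: "rcp k P \<Longrightarrow> rcp k Q \<Longrightarrow> rcp k (\<lambda>xs. P xs \<longrightarrow> Q xs)"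
proof -
  assume "rcp k P" "rcp k Q"
  then have "rcp k (\<lambda>xs. \<not> P xs \<or> Q xs)" by (intro rcp_not rcp_or)
  then show ?thesis by simp
qed

lemma rcp_bex: "rcf k B \<Longrightarrow> rcp (Suc k) P \<Longrightarrow> rcp k (\<lambda>xs. \<exists>i<B xs. P (i # xs))"
proof -
  assume a: "rcf k B" "rcp (Suc k) P"
  have S: "rcf k (\<lambda>xs. \<Sum>i<B xs. (if P (i # xs) then 1 else 0))"
    using a unfolding rcp_def by (intro rcf_sum)
  have "rcp k (\<lambda>xs. 0 < (\<Sum>i<B xs. (if P (i # xs) then 1 else 0::nat)))"
    by (rule rcp_less[OF rcf_const[of k 0] S])
  moreover have "(0 < (\<Sum>i<n. (if Q i then 1 else 0::nat))) \<longleftrightarrow> (\<exists>i<n. Q i)" for n :: nat and Q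
    by (induction n) (auto simp: less_Suc_eq)
  ultimately show ?thesis by simp
qed

lemma rcp_ball: "rcf k B \<Longrightarrow> rcp (Suc k) P \<Longrightarrow> rcp k (\<lambda>xs. \<forall>i<B xs. P (i # xs))"
proof -
  assume a: "rcf k B" "rcp (Suc k) P"
  then have "rcp k (\<lambda>xs. \<not> (\<exists>i<B xs. \<not> P (i # xs)))"
    by (intro rcp_not rcp_bex rcp_not)
  then show ?thesis by simp
qed

lemma rcp_True: "rcp k (\<lambda>_. True)" unfolding rcp_def by (simp add: rcf_const)

lemma rcf_hd: "0 < k \<Longrightarrow> rcf k (\<lambda>ys. hd ys)"
  by (rule rcf_cong[OF rcf_proj[of 0 k]]) (auto simp: hd_conv_nth)

lemma rcf_tl_nth: "Suc i < k \<Longrightarrow> rcf k (\<lambda>ys. tl ys ! i)"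
  by (rule rcf_cong[OF rcf_proj[of "Suc i" k]]) (auto simp: nth_tl)

lemma rcf_hd_tl: "Suc 0 < k \<Longrightarrow> rcf k (\<lambda>ys. hd (tl ys))"
  by (rule rcf_cong[OF rcf_proj[of "Suc 0" k]]) (simp, case_tac xs, simp, case_tac list, auto)

lemma rcf_tl_tl_nth: "Suc (Suc i) < k \<Longrightarrow> rcf k (\<lambda>ys. tl (tl ys) ! i)"
  by (rule rcf_cong[OF rcf_proj[of "Suc (Suc i)" k]]) (auto simp: nth_tl)

lemma rcf_sum':
  assumes "rcf k B" "rcf (Suc k) (\<lambda>ys. P (hd ys) (tl ys))"
  shows "rcf k (\<lambda>xs. \<Sum>i<B xs. P i xs)"
  using rcf_sum[OF assms] by simp

lemma rcp_bex':
  assumes "rcf k B" "rcp (Suc k) (\<lambda>ys. P (hd ys) (tl ys))"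
  shows "rcp k (\<lambda>xs. \<exists>i<B xs. P i xs)"
  using rcp_bex[OF assms] by simp

lemma rcp_ball':
  assumes "rcf k B" "rcp (Suc k) (\<lambda>ys. P (hd ys) (tl ys))"
  shows "rcp k (\<lambda>xs. \<forall>i<B xs. P i xs)"
  using rcp_ball[OF assms] by simp

lemma rcf_lift1: "rcf 1 (\<lambda>xs. h (xs ! 0)) \<Longrightarrow> rcf k F \<Longrightarrow> rcf k (\<lambda>xs. h (F xs))"
  using rcf_comp1[of "\<lambda>xs. h (xs ! 0)"] by simp

lemma rcf_lift2: "rcf 2 (\<lambda>xs. h (xs ! 0) (xs ! 1)) \<Longrightarrow> rcf k F \<Longrightarrow> rcf k G \<Longrightarrow> rcf k (\<lambda>xs. h (F xs) (G xs))"
  using rcf_comp2[of "\<lambda>xs. h (xs ! 0) (xs ! 1)"] by simp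

lemma rcp_lift1: "rcp 1 (\<lambda>xs. h (xs ! 0)) \<Longrightarrow> rcf k F \<Longrightarrow> rcp k (\<lambda>xs. h (F xs))"
  unfolding rcp_def using rcf_lift1[of "\<lambda>x. if h x then 1 else 0"] by simp

lemma rcp_lift2: "rcp 2 (\<lambda>xs. h (xs ! 0) (xs ! 1)) \<Longrightarrow> rcf k F \<Longrightarrow> rcf k G \<Longrightarrow> rcp k (\<lambda>xs. h (F xs) (G xs))"
  unfolding rcp_def using rcf_lift2[of "\<lambda>x y. if h x y then 1 else 0"] by simp

lemmas rcf_intros = rcf_const rcf_proj rcf_add rcf_mult rcf_sub rcf_Suc rcf_If rcf_sum'
  rcp_eq rcp_le rcp_less rcp_and rcp_or rcp_not rcp_imp rcp_bex' rcp_ball' rcp_True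
  rcf_hd rcf_tl_nth rcf_hd_tl rcf_tl_tl_nth

lemma sum_unique:
  assumes "x0 < B" "P x0" "\<And>x. x < B \<Longrightarrow> P x \<Longrightarrow> x = x0"
  shows "(\<Sum>x<B. if P x then x else 0) = (x0::nat)"
proof -
  have "(\<Sum>x<B. if P x then x else 0) = (\<Sum>x<B. if x = x0 then x0 else 0)"
  proof (rule sum.cong)
    fix x assume "x \<in> {..<B}"
    then show "(if P x then x else 0) = (if x = x0 then x0 else 0)"
      using assms(2) assms(3)[of x] by (cases "P x") auto
  qed simp
  also have "\<dots> = x0" using assms(1) by (simp add: sum.delta)
  finally show ?thesis .
qed

lemma triangle_sum: "triangle n = (\<Sum>i<Suc n. i)"
  by (induction n) auto

lemma rcf_prod_encode2: "rcf 2 (\<lambda>xs. prod_encode (xs ! 0, xs ! 1))"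
proof -
  have "rcf 2 (\<lambda>xs. (\<Sum>i<Suc (xs ! 0 + xs ! 1). i) + xs ! 0)"
    by (intro rcf_intros; simp)
  then show ?thesis by (rule rcf_cong) (simp add: prod_encode_def triangle_sum)
qed

lemma rcf_prod_encode: "rcf k F \<Longrightarrow> rcf k G \<Longrightarrow> rcf k (\<lambda>xs. prod_encode (F xs, G xs))"
  using rcf_lift2[where h="\<lambda>a b. prod_encode (a, b)", OF rcf_prod_encode2] by simp

definition pdec1 :: "nat \<Rightarrow> nat" where "pdec1 c = fst (prod_decode c)"
definition pdec2 :: "nat \<Rightarrow> nat" where "pdec2 c = snd (prod_decode c)"

lemma pdec_enc[simp]: "pdec1 (prod_encode (a, b)) = a" "pdec2 (prod_encode (a, b)) = b"
  by (auto simp: pdec1_def pdec2_def)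

lemma pdec1_search: "pdec1 c = (\<Sum>x<Suc c. if (\<exists>y<Suc c. prod_encode (x, y) = c) then x else 0)"
proof -
  obtain x0 y0 where "prod_decode c = (x0, y0)" by (cases "prod_decode c")
  then have c: "c = prod_encode (x0, y0)" by (metis prod_decode_inverse)
  have "(\<Sum>x<Suc c. if (\<exists>y<Suc c. prod_encode (x, y) = c) then x else 0) = x0"
  proof (rule sum_unique)
    show "x0 < Suc c" using le_prod_encode_1[of x0 y0] c by simp
    show "\<exists>y<Suc c. prod_encode (x0, y) = c" using le_prod_encode_2[of y0 x0] c by auto
  qed (use c in auto)
  then show ?thesis using c by simp
qed

lemma pdec2_search: "pdec2 c = (\<Sum>y<Suc c. if (\<exists>x<Suc c. prod_encode (x, y) = c) then y else 0)"
proof -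
  obtain x0 y0 where "prod_decode c = (x0, y0)" by (cases "prod_decode c")
  then have c: "c = prod_encode (x0, y0)" by (metis prod_decode_inverse)
  have "(\<Sum>y<Suc c. if (\<exists>x<Suc c. prod_encode (x, y) = c) then y else 0) = y0"
  proof (rule sum_unique)
    show "y0 < Suc c" using le_prod_encode_2[of y0 x0] c by simp
    show "\<exists>x<Suc c. prod_encode (x, y0) = c" using le_prod_encode_1[of x0 y0] c by auto
  qed (use c in auto)
  then show ?thesis using c by simp
qed

lemma rcf_pdec1_1: "rcf 1 (\<lambda>xs. pdec1 (xs ! 0))"
proof -
  have "rcf 1 (\<lambda>xs. \<Sum>x<Suc (xs!0). if (\<exists>y<Suc (xs!0). prod_encode (x, y) = xs!0) then x else 0)"
    by (intro rcf_intros rcf_prod_encode; simp)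
  then show ?thesis by (rule rcf_cong) (simp add: pdec1_search)
qed

lemma rcf_pdec2_1: "rcf 1 (\<lambda>xs. pdec2 (xs ! 0))"
proof -
  have "rcf 1 (\<lambda>xs. \<Sum>y<Suc (xs!0). if (\<exists>x<Suc (xs!0). prod_encode (x, y) = xs!0) then y else 0)"
    by (intro rcf_intros rcf_prod_encode; simp)
  then show ?thesis by (rule rcf_cong) (simp add: pdec2_search)
qed

lemmas rcf_pdec1 = rcf_lift1[OF rcf_pdec1_1]
lemmas rcf_pdec2 = rcf_lift1[OF rcf_pdec2_1]

lemma half_search: "c div 2 = (\<Sum>k<Suc c. if 2 * k = c \<or> Suc (2 * k) = c then k else 0)"
  by (rule sym, rule sum_unique) auto

lemma rcf_half_1: "rcf 1 (\<lambda>xs. xs ! 0 div 2)"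
proof -
  have "rcf 1 (\<lambda>xs. \<Sum>k<Suc (xs!0). if 2 * k = xs!0 \<or> Suc (2 * k) = xs!0 then k else 0)"
    by (intro rcf_intros; simp)
  then show ?thesis by (rule rcf_cong) (simp add: half_search)
qed

lemmas rcf_half = rcf_lift1[OF rcf_half_1]

lemma rcp_even_1: "rcp 1 (\<lambda>xs. even (xs ! 0))"
proof -
  have "rcp 1 (\<lambda>xs. \<exists>k<Suc (xs!0). 2 * k = xs!0)"
    by (intro rcf_intros; simp)
  moreover have "(\<exists>k<Suc c. 2 * k = c) \<longleftrightarrow> even c" for c :: nat
    by (auto elim!: evenE)
  ultimately show ?thesis by simp
qed

lemmas rcp_even = rcp_lift1[OF rcp_even_1]

lemma dvd_search: "(d dvd m) \<longleftrightarrow> (\<exists>j<Suc m. j * d = (m::nat))"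
proof
  assume "d dvd m"
  then obtain j where j: "m = d * j" by auto
  show "\<exists>j<Suc m. j * d = m"
  proof (cases "d = 0")
    case True then show ?thesis using j by auto
  next
    case False then have "j \<le> m" using j by simp
    then show ?thesis using j by (metis le_imp_less_Suc mult.commute)
  qed
qed auto

lemma rcp_dvd_2: "rcp 2 (\<lambda>xs. xs ! 0 dvd xs ! 1)"
proof -
  have "rcp 2 (\<lambda>xs. \<exists>j<Suc (xs!1). j * xs!0 = xs!1)"
    by (intro rcf_intros; simp)
  then show ?thesis by (simp add: dvd_search)
qed

lemmas rcp_dvd = rcp_lift2[OF rcp_dvd_2]

definition ipos :: "nat \<Rightarrow> nat" where "ipos c = (if even c then c div 2 else 0)"
definition ineg :: "nat \<Rightarrow> nat" where "ineg c = (if even c then 0 else Suc (c div 2))"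

lemma int_decode_split: "int_decode c = int (ipos c) - int (ineg c)"
  by (auto simp: int_decode_def sum_decode_def ipos_def ineg_def)

lemma ipos_ineg_zero: "ipos c = 0 \<or> ineg c = 0"
  by (auto simp: ipos_def ineg_def)

lemma rcf_ipos_1: "rcf 1 (\<lambda>xs. ipos (xs ! 0))"
  unfolding ipos_def by (intro rcf_intros rcp_even rcf_half; simp)
lemma rcf_ineg_1: "rcf 1 (\<lambda>xs. ineg (xs ! 0))"
  unfolding ineg_def by (intro rcf_intros rcp_even rcf_half; simp)
lemmas rcf_ipos = rcf_lift1[OF rcf_ipos_1]
lemmas rcf_ineg = rcf_lift1[OF rcf_ineg_1]

definition ienc :: "nat \<Rightarrow> nat \<Rightarrow> nat" where
  "ienc a b = (if b \<le> a then 2 * (a - b) else 2 * (b - a) - 1)"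

lemma ienc_int_encode: "ienc a b = int_encode (int a - int b)"
  by (auto simp: ienc_def int_encode_def sum_encode_def nat_diff_distrib)

lemma rcf_ienc_2: "rcf 2 (\<lambda>xs. ienc (xs ! 0) (xs ! 1))"
  unfolding ienc_def by (intro rcf_intros; simp)
lemmas rcf_ienc = rcf_lift2[OF rcf_ienc_2]

definition rnp :: "nat \<Rightarrow> nat" where "rnp c = ipos (pdec1 c)"
definition rnn :: "nat \<Rightarrow> nat" where "rnn c = ineg (pdec1 c)"
definition rdp :: "nat \<Rightarrow> nat" where "rdp c = ipos (pdec2 c)"
definition rdn :: "nat \<Rightarrow> nat" where "rdn c = ineg (pdec2 c)"

lemma rcf_rnp_1: "rcf 1 (\<lambda>xs. rnp (xs ! 0))" unfolding rnp_def by (intro rcf_ipos rcf_pdec1 rcf_intros; simp)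
lemma rcf_rnn_1: "rcf 1 (\<lambda>xs. rnn (xs ! 0))" unfolding rnn_def by (intro rcf_ineg rcf_pdec1 rcf_intros; simp)
lemma rcf_rdp_1: "rcf 1 (\<lambda>xs. rdp (xs ! 0))" unfolding rdp_def by (intro rcf_ipos rcf_pdec2 rcf_intros; simp)
lemma rcf_rdn_1: "rcf 1 (\<lambda>xs. rdn (xs ! 0))" unfolding rdn_def by (intro rcf_ineg rcf_pdec2 rcf_intros; simp)
lemmas rcf_rnp = rcf_lift1[OF rcf_rnp_1]
lemmas rcf_rnn = rcf_lift1[OF rcf_rnn_1]
lemmas rcf_rdp = rcf_lift1[OF rcf_rdp_1]
lemmas rcf_rdn = rcf_lift1[OF rcf_rdn_1]

definition rvalid :: "nat \<Rightarrow> bool" where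
  "rvalid c \<longleftrightarrow> rdn c = 0 \<and> 0 < rdp c \<and>
     (\<forall>d<Suc (rdp c). d dvd (rnp c + rnn c) \<and> d dvd rdp c \<longrightarrow> d \<le> 1)"

lemma rcp_rvalid_1: "rcp 1 (\<lambda>xs. rvalid (xs ! 0))"
  unfolding rvalid_def
  by (intro rcf_intros rcp_dvd rcf_rnp rcf_rnn rcf_rdp rcf_rdn; simp)
lemmas rcp_rvalid = rcp_lift1[OF rcp_rvalid_1]

lemma coprime_search:
  assumes "0 < (b::nat)"
  shows "(\<forall>d<Suc b. d dvd a \<and> d dvd b \<longrightarrow> d \<le> 1) \<longleftrightarrow> coprime a b"
proof
  assume H: "\<forall>d<Suc b. d dvd a \<and> d dvd b \<longrightarrow> d \<le> 1"
  have "gcd a b \<le> b" using assms by (simp add: gcd_le2_nat)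
  then have "gcd a b \<le> 1" using H by auto
  moreover have "gcd a b \<noteq> 0" using assms by simp
  ultimately have "gcd a b = 1" by linarith
  then show "coprime a b" by (simp add: coprime_iff_gcd_eq_1)
next
  assume "coprime a b"
  then show "\<forall>d<Suc b. d dvd a \<and> d dvd b \<longrightarrow> d \<le> 1"
    by (metis coprime_common_divisor_nat le_refl)
qed

lemma rat_code_parts:
  assumes "c = rat_code r"
  shows "quotient_of r = (int (rnp c) - int (rnn c), int (rdp c))"
    and "rdn c = 0" and "0 < rdp c"
    and "(rnp c = 0 \<or> rnn c = 0)"
proof -
  obtain P Q where q: "quotient_of r = (P, Q)" by (cases "quotient_of r")
  have Q: "Q > 0" using quotient_of_denom_pos[OF q] .
  have c: "c = prod_encode (int_encode P, int_encode Q)" using assms q by (simp add: rat_code_def)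
  have P: "P = int (rnp c) - int (rnn c)"
    using int_decode_split[of "pdec1 c"] c by (simp add: rnp_def rnn_def)
  have Q2: "Q = int (rdp c) - int (rdn c)"
    using int_decode_split[of "pdec2 c"] c by (simp add: rdp_def rdn_def)
  have e: "even (int_encode Q)" using Q by (simp add: int_encode_def sum_encode_def)
  show "rdn c = 0" using e c by (simp add: rdn_def ineg_def)
  then show "quotient_of r = (int (rnp c) - int (rnn c), int (rdp c))" using q P Q2 by simp
  show "0 < rdp c" using Q Q2 \<open>rdn c = 0\<close> by simp
  show "rnp c = 0 \<or> rnn c = 0" by (simp add: rnp_def rnn_def ipos_ineg_zero)
qed

lemma rat_code_valid: "rvalid (rat_code r)"
proof -
  let ?c = "rat_code r"
  note parts = rat_code_parts[OF refl, of r]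
  have cp: "coprime (int (rnp ?c) - int (rnn ?c)) (int (rdp ?c))"
    using quotient_of_coprime[OF parts(1)] .
  have abs: "\<bar>int (rnp ?c) - int (rnn ?c)\<bar> = int (rnp ?c + rnn ?c)" using parts(4) by auto
  have "coprime (int (rnp ?c + rnn ?c)) (int (rdp ?c))"
    using cp coprime_abs_left_iff abs by metis
  then have "coprime (rnp ?c + rnn ?c) (rdp ?c)" by (metis coprime_int_iff)
  then show ?thesis unfolding rvalid_def using parts(2,3) coprime_search by blast
qed

lemma rvalid_code:
  assumes "rvalid c"
  shows "c = rat_code (Fract (int (rnp c) - int (rnn c)) (int (rdp c)))"
proof -
  let ?P = "int (rnp c) - int (rnn c)" and ?Q = "int (rdp c)"
  have v: "rdn c = 0" "0 < rdp c" "\<forall>d<Suc (rdp c). d dvd (rnp c + rnn c) \<and> d dvd rdp c \<longrightarrow> d \<le> 1"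
    using assms unfolding rvalid_def by auto
  have "coprime (rnp c + rnn c) (rdp c)" using v coprime_search by blast
  then have "coprime (int (rnp c + rnn c)) ?Q" by (metis coprime_int_iff)
  moreover have "\<bar>?P\<bar> = int (rnp c + rnn c)"
    using ipos_ineg_zero[of "pdec1 c"] by (auto simp: rnp_def rnn_def)
  ultimately have cp: "coprime ?P ?Q" using coprime_abs_left_iff by metis
  have qo: "quotient_of (Fract ?P ?Q) = (?P, ?Q)"
    using cp v(2) by (simp add: quotient_of_Fract)
  have "int_encode ?P = pdec1 c"
    using int_decode_split[of "pdec1 c"] int_decode_inverse[of "pdec1 c"] by (simp add: rnp_def rnn_def)
  moreover have "int_encode ?Q = pdec2 c"
    using int_decode_split[of "pdec2 c"] int_decode_inverse[of "pdec2 c"] v(1) by (simp add: rdp_def rdn_def)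
  ultimately show ?thesis using qo
    by (simp add: rat_code_def pdec1_def pdec2_def)
qed

lemma rvalid_iff: "rvalid c \<longleftrightarrow> (\<exists>r. c = rat_code r)"
  using rvalid_code rat_code_valid by blast

lemma rat_code_inj: "rat_code r = rat_code r' \<longleftrightarrow> r = r'"
  by (auto simp: rat_code_def prod_eq_iff int_encode_eq quotient_of_inject_eq[symmetric])

lemma rat_code_value:
  assumes "c = rat_code r"
  shows "r = of_int (int (rnp c) - int (rnn c)) / of_int (int (rdp c))"
  using quotient_of_div[OF rat_code_parts(1)[OF assms]] by simp

definition Tm :: "real \<Rightarrow> real \<Rightarrow> real" where
  "Tm l x = (if x < 1 then x / l else (x - 1) / l)"

definition Cset :: "real \<Rightarrow> real set" where
  "Cset l = {x. \<exists>e. (\<forall>i. e i \<in> {0,1}) \<and> (\<lambda>i. e i * l ^ i) sums x}"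

lemma orbit_expansion:
  assumes l: "0 < l"
  shows "x = (\<Sum>i<n. (if (Tm l ^^ i) x < 1 then 0 else 1) * l ^ i) + l ^ n * (Tm l ^^ n) x"
proof (induction n)
  case 0 then show ?case by simp
next
  case (Suc n)
  let ?y = "(Tm l ^^ n) x"
  have step: "l ^ n * ?y = (if ?y < 1 then 0 else 1) * l ^ n + l ^ Suc n * Tm l ?y"
    using l by (auto simp: Tm_def field_simps)
  show ?case using Suc step by simp
qed

lemma stays_imp_C:
  assumes l: "0 < l" "l < 1" and st: "\<forall>n. (Tm l ^^ n) x \<in> {0..1/(1-l)}"
  shows "x \<in> Cset l"
proof -
  define e where "e i = (if (Tm l ^^ i) x < 1 then 0 else 1::real)" for i
  have exp: "(\<Sum>i<n. e i * l ^ i) = x - l ^ n * (Tm l ^^ n) x" for n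
  proof -
    have "(\<Sum>i<n. e i * l ^ i) = (\<Sum>i<n. (if (Tm l ^^ i) x < 1 then 0 else 1) * l ^ i)"
      by (simp add: e_def)
    then show ?thesis using orbit_expansion[OF l(1), of x n] by linarith
  qed
  have lim0: "(\<lambda>n. l ^ n * (Tm l ^^ n) x) \<longlonglongrightarrow> 0"
  proof (rule real_tendsto_sandwich[where f="\<lambda>n. 0" and h="\<lambda>n. l ^ n * (1/(1-l))"])
    have "0 \<le> l ^ n * (Tm l ^^ n) x" for n
      using st l by (intro mult_nonneg_nonneg) auto
    then show "\<forall>\<^sub>F n in sequentially. 0 \<le> l ^ n * (Tm l ^^ n) x"
      by (intro always_eventually) blast
    have "l ^ n * (Tm l ^^ n) x \<le> l ^ n * (1 / (1 - l))" for n
      using st[rule_format, of n] l by (intro mult_left_mono) simp_all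
    then show "\<forall>\<^sub>F n in sequentially. l ^ n * (Tm l ^^ n) x \<le> l ^ n * (1 / (1 - l))"
      by (intro always_eventually) blast
    have "(\<lambda>n. l ^ n) \<longlonglongrightarrow> 0" using l by (intro LIMSEQ_power_zero) simp
    then show "(\<lambda>n. l ^ n * (1 / (1 - l))) \<longlonglongrightarrow> 0"
      by (rule tendsto_mult_left_zero)
  qed simp
  have "(\<lambda>n. x - l ^ n * (Tm l ^^ n) x) \<longlonglongrightarrow> x - 0"
    by (intro tendsto_diff tendsto_const lim0)
  then have "(\<lambda>i. e i * l ^ i) sums x" unfolding sums_def exp by simp
  moreover have "\<forall>i. e i \<in> {0,1}" unfolding e_def by auto
  ultimately show ?thesis unfolding Cset_def by blast
qed

lemma Tm_invariant_half:
  assumes l: "0 < l" "l < 1" "1/2 \<le> l" and x: "x \<in> {0..1/(1-l)}"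
  shows "Tm l x \<in> {0..1/(1-l)}"
proof (cases "x < 1")
  case True
  have "x / l \<le> 1 / l" using True l by (simp add: divide_right_mono)
  also have "1 / l \<le> 1 / (1 - l)" using l by (simp add: frac_le)
  finally show ?thesis using True x l by (simp add: Tm_def)
next
  case False
  have "(x - 1) / l \<le> (1/(1-l) - 1) / l" using x l by (simp add: divide_right_mono)
  also have "\<dots> = 1/(1-l)" using l by (simp add: field_simps)
  finally show ?thesis using False x l by (simp add: Tm_def)
qed

lemma half_I_sub_C:
  assumes l: "0 < l" "l < 1" "1/2 \<le> l" and x: "x \<in> {0..1/(1-l)}"
  shows "x \<in> Cset l"
proof (rule stays_imp_C[OF l(1,2)])
  show "\<forall>n. (Tm l ^^ n) x \<in> {0..1/(1-l)}"
  proof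
    fix n show "(Tm l ^^ n) x \<in> {0..1/(1-l)}"
      by (induction n) (use x Tm_invariant_half[OF l] in auto)
  qed
qed

lemma C_bounds:
  assumes l: "0 < l" "l < 1" and "x \<in> Cset l"
  shows "x \<in> {0..1/(1-l)}"
proof -
  obtain e where e: "\<forall>i. e i \<in> {0,1}" "(\<lambda>i. e i * l ^ i) sums x"
    using assms(3) unfolding Cset_def by auto
  have g: "(\<lambda>i. l ^ i) sums (1/(1-l))" using geometric_sums[of l] l by simp
  have h1: "0 \<le> e i * l ^ i" for i
    using e(1)[rule_format, of i] l by (cases "e i = 0") auto
  have h2: "e i * l ^ i \<le> l ^ i" for i
    using e(1)[rule_format, of i] l by (cases "e i = 0") auto
  have "0 \<le> x"
    by (rule sums_le[OF _ sums_zero e(2)]) (use h1 in auto)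
  moreover have "x \<le> 1/(1-l)"
    by (rule sums_le[OF _ e(2) g]) (use h2 in auto)
  ultimately show ?thesis by simp
qed

lemma C_step:
  assumes l: "0 < l" "l < 1" and x: "x \<in> Cset l"
  shows "Tm l x \<in> Cset l"
proof -
  obtain e where e: "\<forall>i. e i \<in> {0,1}" "(\<lambda>i. e i * l ^ i) sums x"
    using x unfolding Cset_def by auto
  have "(\<lambda>i. e (Suc i) * l ^ Suc i) sums (x - e 0)"
    using sums_Suc_iff[of "\<lambda>i. e i * l ^ i" "x - e 0"] e(2) by simp
  then have "(\<lambda>i. e (Suc i) * l ^ Suc i / l) sums ((x - e 0) / l)"
    by (rule sums_divide)
  moreover have "e (Suc i) * l ^ Suc i / l = e (Suc i) * l ^ i" for i using l by simp
  ultimately have ts: "(\<lambda>i. e (Suc i) * l ^ i) sums ((x - e 0) / l)" by simp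
  have tC: "(x - e 0) / l \<in> Cset l"
    unfolding Cset_def using ts e(1) by (intro CollectI exI[of _ "\<lambda>i. e (Suc i)"]) simp
  have tB: "(x - e 0) / l \<in> {0..1/(1-l)}" using C_bounds[OF l tC] .
  have xB: "x \<in> {0..1/(1-l)}" using C_bounds[OF l x] .
  show ?thesis
  proof (cases "x < 1")
    case True
    have "e 0 = 0"
    proof (rule ccontr)
      assume "e 0 \<noteq> 0" then have "e 0 = 1" using e(1) by auto
      then have "x = 1 + l * ((x - e 0) / l)" using l by simp
      moreover have "0 \<le> l * ((x - e 0) / l)" using tB l by (intro mult_nonneg_nonneg) auto
      ultimately have "x \<ge> 1" by linarith
      then show False using True by simp
    qed
    then show ?thesis using tC True by (simp add: Tm_def)
  next
    case False
    show ?thesis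
    proof (cases "e 0 = 1")
      case True then show ?thesis using tC False by (simp add: Tm_def)
    next
      case e0: False
      then have "e 0 = 0" using e(1) by auto
      then have "x = l * ((x - e 0) / l)" using l by simp
      moreover have "l * ((x - e 0) / l) \<le> l * (1/(1-l))"
        using tB l by (intro mult_left_mono) auto
      ultimately have "x \<le> l * (1/(1-l))" by linarith
      then have "1 \<le> l / (1 - l)" using False by simp
      then have "1 - l \<le> l" using l by (simp add: field_simps)
      then have h: "1/2 \<le> l" by simp
      show ?thesis using half_I_sub_C[OF l h Tm_invariant_half[OF l h xB]] .
    qed
  qed
qed

theorem cantor_iff:
  assumes l: "0 < l" "l < 1"
  shows "x \<in> Cset l \<longleftrightarrow> (\<forall>n. (Tm l ^^ n) x \<in> {0..1/(1-l)})"
proof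
  assume x: "x \<in> Cset l"
  have "(Tm l ^^ n) x \<in> Cset l" for n
    by (induction n) (use x C_step[OF l] in auto)
  then show "\<forall>n. (Tm l ^^ n) x \<in> {0..1/(1-l)}" using C_bounds[OF l] by blast
qed (rule stays_imp_C[OF l])

theorem tds_translate:
  assumes l: "0 < l" "l < 1" and ab: "a \<noteq> b"
  shows "(\<exists>w. (\<forall>i. w i \<in> {a, b}) \<and> (\<lambda>i. w i * l ^ i) sums t) \<longleftrightarrow>
         (t - a / (1 - l)) / (b - a) \<in> Cset l"
proof -
  have g: "(\<lambda>i. l ^ i) sums (1/(1-l))" using geometric_sums[of l] l by simp
  have ga: "(\<lambda>i. a * l ^ i) sums (a / (1-l))" using sums_mult[OF g, of a] by simp
  show ?thesis
  proof
    assume "\<exists>w. (\<forall>i. w i \<in> {a, b}) \<and> (\<lambda>i. w i * l ^ i) sums t"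
    then obtain w where w: "\<forall>i. w i \<in> {a, b}" "(\<lambda>i. w i * l ^ i) sums t" by auto
    define e where "e i = (w i - a) / (b - a)" for i
    have "\<forall>i. e i \<in> {0,1}" using w(1) ab by (auto simp: e_def)
    moreover have "(\<lambda>i. (w i * l ^ i - a * l ^ i) / (b - a)) sums ((t - a / (1 - l)) / (b - a))"
      by (intro sums_divide sums_diff w(2) ga)
    moreover have "(w i * l ^ i - a * l ^ i) / (b - a) = e i * l ^ i" for i
      by (simp add: e_def field_simps)
    ultimately show "(t - a / (1 - l)) / (b - a) \<in> Cset l" unfolding Cset_def by auto
  next
    assume "(t - a / (1 - l)) / (b - a) \<in> Cset l"
    then obtain e where e: "\<forall>i. e i \<in> {0,1}" "(\<lambda>i. e i * l ^ i) sums ((t - a / (1 - l)) / (b - a))"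
      unfolding Cset_def by auto
    define w where "w i = a + (b - a) * e i" for i
    have "\<forall>i. w i \<in> {a, b}" using e(1) by (force simp: w_def)
    moreover have "(\<lambda>i. a * l ^ i + (b - a) * (e i * l ^ i)) sums (a / (1 - l) + (b - a) * ((t - a / (1 - l)) / (b - a)))"
      by (intro sums_add ga sums_mult e(2))
    moreover have "a / (1 - l) + (b - a) * ((t - a / (1 - l)) / (b - a)) = t" using ab by simp
    moreover have "a * l ^ i + (b - a) * (e i * l ^ i) = w i * l ^ i" for i
      by (simp add: w_def algebra_simps)
    ultimately show "\<exists>w. (\<forall>i. w i \<in> {a, b}) \<and> (\<lambda>i. w i * l ^ i) sums t" by auto
  qed
qed

theorem tds_same:
  fixes l :: real
  assumes l: "0 < l" "l < 1"
  shows "(\<exists>w. (\<forall>i. w i \<in> {a, a}) \<and> (\<lambda>i. w i * l ^ i) sums t) \<longleftrightarrow> t = a / (1 - l)"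
proof -
  have g: "(\<lambda>i. l ^ i) sums (1/(1-l))" using geometric_sums[of l] l by simp
  have ga: "(\<lambda>i. a * l ^ i) sums (a / (1-l))" using sums_mult[OF g, of a] by simp
  show ?thesis
  proof
    assume "\<exists>w. (\<forall>i. w i \<in> {a, a}) \<and> (\<lambda>i. w i * l ^ i) sums t"
    then obtain w where w: "\<forall>i. w i \<in> {a, a}" "(\<lambda>i. w i * l ^ i) sums t" by auto
    have "w = (\<lambda>i. a)" using w(1) by auto
    then show "t = a / (1 - l)" using w(2) ga sums_unique2 by blast
  next
    assume "t = a / (1 - l)" then show "\<exists>w. (\<forall>i. w i \<in> {a, a}) \<and> (\<lambda>i. w i * l ^ i) sums t"
      using ga by (intro exI[of _ "\<lambda>i. a"]) auto
  qed
qed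

definition secs :: "nat \<Rightarrow> nat \<Rightarrow> nat \<Rightarrow> pam_section list" where
  "secs p q N = [
   (None, Some (0, False), -1, of_nat q + 2),
   (Some (0, True), Some (1, False), of_nat q / of_nat p, 0),
   (Some (1, True), Some (of_nat q / of_nat (q - p), True), of_nat q / of_nat p, - (of_nat q / of_nat p)),
   (Some (of_nat q / of_nat (q - p), False), Some (of_nat q + 1, False), 1, of_nat q + 1),
   (Some (of_nat q + 1, True), Some (of_nat q + 2, False), of_nat N, (of_nat q + 1) - of_nat N * (of_nat q + 1)),
   (Some (of_nat q + 2, True), None, 1, -1)]"

definition Ur :: "nat \<Rightarrow> nat \<Rightarrow> real" where "Ur p q = real q / real (q - p)"

lemma Ur_bounds:
  assumes "0 < p" "p < q"
  shows "1 \<le> Ur p q" "Ur p q < real q + 1"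
proof -
  have qp: "real (q - p) \<ge> 1" "real (q - p) \<le> real q" using assms by auto
  show "1 \<le> Ur p q" using qp unfolding Ur_def by (simp add: field_simps)
  have "real q / real (q - p) \<le> real q / 1"
    using qp by (intro divide_left_mono) auto
  then show "Ur p q < real q + 1" unfolding Ur_def by simp
qed

lemma Ur_eq: "0 < p \<Longrightarrow> p < q \<Longrightarrow> Ur p q = 1 / (1 - real p / real q)"
  unfolding Ur_def by (simp add: field_simps of_nat_diff)

definition sidx :: "nat \<Rightarrow> nat \<Rightarrow> real \<Rightarrow> nat" where
  "sidx p q x = (if x < 0 then 0 else if x < 1 then 1 else if x \<le> Ur p q then 2
     else if x < real q + 1 then 3 else if x < real q + 2 then 4 else 5)"

lemma length_secs[simp]: "length (secs p q N) = 6" by (simp add: secs_def)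

lemma mem_secs:
  assumes "0 < p" "p < q" "i < 6"
  shows "x \<in> sec_set (secs p q N ! i) \<longleftrightarrow> i = sidx p q x"
proof -
  note b = Ur_bounds[OF assms(1,2)]
  have i: "i = 0 \<or> i = 1 \<or> i = 2 \<or> i = 3 \<or> i = 4 \<or> i = 5" using assms(3) by auto
  have U: "of_rat (of_nat q / of_nat (q - p)) = Ur p q"
    unfolding Ur_def by (simp add: of_rat_divide)
  show ?thesis using i b
    by (elim disjE) (auto simp: secs_def sec_set_def sidx_def U of_rat_add)
qed

lemma pam_valid_secs:
  assumes "0 < p" "p < q" "0 < N"
  shows "pam_valid (secs p q N)"
  unfolding pam_valid_def
proof (intro conjI)
  show "\<forall>i<length (secs p q N). \<forall>j<length (secs p q N). i \<noteq> j \<longrightarrow>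
          sec_set (secs p q N ! i) \<inter> sec_set (secs p q N ! j) = {}"
    using mem_secs[OF assms(1,2)] by auto
  have "x \<in> (\<Union>s\<in>set (secs p q N). sec_set s)" for x
  proof -
    have "sidx p q x < 6" by (simp add: sidx_def)
    then have "secs p q N ! sidx p q x \<in> set (secs p q N)" by simp
    moreover have "x \<in> sec_set (secs p q N ! sidx p q x)"
      using mem_secs[OF assms(1,2) \<open>sidx p q x < 6\<close>] by simp
    ultimately show ?thesis by blast
  qed
  then show "(\<Union>s\<in>set (secs p q N). sec_set s) = UNIV" by blast
  show "\<forall>s\<in>set (secs p q N). fst (snd (snd s)) \<noteq> 0"
    using assms by (simp add: secs_def)
qed

definition Fm :: "nat \<Rightarrow> nat \<Rightarrow> nat \<Rightarrow> real \<Rightarrow> real" where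
  "Fm p q N x = (if x < 0 then - x + (real q + 2)
     else if x < 1 then real q / real p * x
     else if x \<le> Ur p q then real q / real p * x - real q / real p
     else if x < real q + 1 then x + (real q + 1)
     else if x < real q + 2 then real N * x + ((real q + 1) - real N * (real q + 1))
     else x - 1)"

lemma pam_apply_secs:
  assumes "0 < p" "p < q"
  shows "pam_apply (secs p q N) x = Fm p q N x"
proof -
  note b = Ur_bounds[OF assms(1,2)]
  have U: "of_rat (of_nat q / of_nat (q - p)) = Ur p q"
    unfolding Ur_def by (simp add: of_rat_divide)
  show ?thesis
    using b unfolding pam_apply_def Fm_def Ur_def
    by (simp add: secs_def sec_set_def of_rat_add of_rat_divide of_rat_mult of_rat_minus of_rat_diff)
qed


lemma Fm_I:
  assumes "0 < p" "p < q" "x \<in> {0..Ur p q}"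
  shows "Fm p q N x = Tm (real p / real q) x"
  using assms by (auto simp: Fm_def Tm_def field_simps)

lemma Fm_top:
  assumes "0 < p" "p < q" "real q + 2 \<le> y"
  shows "Fm p q N y = y - 1"
  using assms Ur_bounds[OF assms(1,2)] by (auto simp: Fm_def)

lemma Fm_funnel:
  assumes "0 < p" "p < q" "real q + 1 \<le> y" "y < real q + 2"
  shows "Fm p q N y = real N * y + ((real q + 1) - real N * (real q + 1))"
  using assms Ur_bounds[OF assms(1,2)] by (auto simp: Fm_def)

lemma funnel_down:
  assumes pq: "0 < p" "p < q"
    and base: "\<And>y. real q + 1 \<le> y \<Longrightarrow> y < real q + 2 \<Longrightarrow> y * real N ^ k \<in> \<int> \<Longrightarrow>
                 \<exists>m. (Fm p q N ^^ m) y = real q + 1"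
  shows "real q + 1 \<le> y \<Longrightarrow> y * real N ^ k \<in> \<int> \<Longrightarrow> \<exists>m. (Fm p q N ^^ m) y = real q + 1"
proof (induction "nat \<lfloor>y - (real q + 1)\<rfloor>" arbitrary: y rule: less_induct)
  case less
  show ?case
  proof (cases "y < real q + 2")
    case True then show ?thesis using base less.prems by blast
  next
    case False
    have F: "Fm p q N y = y - 1" using Fm_top[OF pq] False by simp
    have lt: "nat \<lfloor>(y - 1) - (real q + 1)\<rfloor> < nat \<lfloor>y - (real q + 1)\<rfloor>"
      using False by (simp add: floor_diff_of_int[of _ 1, simplified] nat_diff_distrib) linarith
    have "(y - 1) * real N ^ k = y * real N ^ k - real N ^ k" by (simp add: algebra_simps)
    then have Z: "(y - 1) * real N ^ k \<in> \<int>" using less.prems(2) by (simp add: Ints_diff)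
    obtain m where "(Fm p q N ^^ m) (y - 1) = real q + 1"
      using less.hyps[OF lt _ Z] False by force
    then have "(Fm p q N ^^ Suc m) y = real q + 1" by (simp add: funpow_swap1 F)
    then show ?thesis by blast
  qed
qed

lemma funnel:
  assumes pq: "0 < p" "p < q" and N: "0 < N"
  shows "real q + 1 \<le> y \<Longrightarrow> y * real N ^ k \<in> \<int> \<Longrightarrow> \<exists>m. (Fm p q N ^^ m) y = real q + 1"
proof (induction k arbitrary: y)
  case 0
  show ?case
  proof (rule funnel_down[OF pq, where k=0])
    fix z :: real assume z: "real q + 1 \<le> z" "z < real q + 2" "z * real N ^ 0 \<in> \<int>"
    then obtain i where i: "z = of_int i" by (auto elim: Ints_cases)
    have "real_of_int (int q + 1) \<le> real_of_int i" using z i by simp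
    then have a: "int q + 1 \<le> i" by (simp only: of_int_le_iff)
    have "real_of_int i < real_of_int (int q + 2)" using z i by simp
    then have b: "i < int q + 2" by (simp only: of_int_less_iff)
    have "i = int q + 1" using a b by linarith
    then have "of_int i = real q + 1" by simp
    then show "\<exists>m. (Fm p q N ^^ m) z = real q + 1" using i by (intro exI[of _ 0]) simp
  qed (use 0 in auto)
next
  case (Suc k)
  show ?case
  proof (rule funnel_down[OF pq, where k="Suc k"])
    fix z :: real assume z: "real q + 1 \<le> z" "z < real q + 2" "z * real N ^ Suc k \<in> \<int>"
    have F: "Fm p q N z = real N * z + ((real q + 1) - real N * (real q + 1))"
      using Fm_funnel[OF pq z(1,2)] .
    have "real N * (z - (real q + 1)) \<ge> 0" using z N by simp
    then have ge: "real q + 1 \<le> Fm p q N z" using F by (simp add: algebra_simps)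
    have "Fm p q N z * real N ^ k = z * real N ^ Suc k + ((real q + 1) - real N * (real q + 1)) * real N ^ k"
      unfolding F by (simp add: algebra_simps)
    then have Z: "Fm p q N z * real N ^ k \<in> \<int>" using z(3) by (simp add: Ints_add Ints_mult)
    obtain m where "(Fm p q N ^^ m) (Fm p q N z) = real q + 1" using Suc.IH[OF ge Z] by blast
    then have "(Fm p q N ^^ Suc m) z = real q + 1" by (simp add: funpow_swap1)
    then show "\<exists>m. (Fm p q N ^^ m) z = real q + 1" by blast
  qed (use Suc.prems in auto)
qed

definition Dset :: "nat \<Rightarrow> real set" where "Dset N = {x. \<exists>k. x * real N ^ k \<in> \<int>}"

lemma Dset_Fm:
  assumes pq: "0 < p" "p < q" and N: "0 < N" "p dvd N" and x: "x \<in> Dset N"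
  shows "Fm p q N x \<in> Dset N"
proof -
  obtain k where k: "x * real N ^ k \<in> \<int>" using x by (auto simp: Dset_def)
  obtain j where j: "N = p * j" using N(2) by auto
  have pr: "real p \<noteq> 0" using pq by simp
  have A: "(real q / real p * x) * real N ^ Suc k = (x * real N ^ k) * real q * real j"
    using pr by (simp add: j field_simps)
  have B: "(real q / real p * x - real q / real p) * real N ^ Suc k =
            (x * real N ^ k) * real q * real j - real q * real j * real N ^ k"
    using pr by (simp add: j field_simps)
  have i1: "(real q / real p * x) * real N ^ Suc k \<in> \<int>" unfolding A using k by (simp add: Ints_mult)
  have i2: "(real q / real p * x - real q / real p) * real N ^ Suc k \<in> \<int>" unfolding B using k
    by (simp add: Ints_mult Ints_diff)
  have i3: "(- x + (real q + 2)) * real N ^ k \<in> \<int>"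
    using k by (simp add: algebra_simps Ints_add Ints_mult Ints_diff Ints_minus)
  have i4: "(x + (real q + 1)) * real N ^ k \<in> \<int>"
    using k by (simp add: algebra_simps Ints_add Ints_mult)
  have i5: "(real N * x + ((real q + 1) - real N * (real q + 1))) * real N ^ k \<in> \<int>"
  proof -
    have "(real N * x + ((real q + 1) - real N * (real q + 1))) * real N ^ k =
          real N * (x * real N ^ k) + ((real q + 1) - real N * (real q + 1)) * real N ^ k"
      by (simp add: algebra_simps)
    then show ?thesis using k by (simp add: Ints_add Ints_mult Ints_diff)
  qed
  have i6: "(x - 1) * real N ^ k \<in> \<int>"
    using k by (simp add: algebra_simps Ints_diff)
  show ?thesis unfolding Fm_def Dset_def
    using i1 i2 i3 i4 i5 i6 by (auto intro: exI[of _ k] exI[of _ "Suc k"])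
qed

lemma escape:
  assumes pq: "0 < p" "p < q" and N: "0 < N" "p dvd N" and x: "x \<in> Dset N"
    and out: "x \<notin> {0..Ur p q}"
  shows "\<exists>m. (Fm p q N ^^ m) x = real q + 1"
proof -
  note b = Ur_bounds[OF pq]
  have fnl: "\<exists>m. (Fm p q N ^^ m) y = real q + 1" if "real q + 1 \<le> y" "y \<in> Dset N" for y
    using that funnel[OF pq N(1)] by (auto simp: Dset_def)
  show ?thesis
  proof (cases "real q + 1 \<le> x")
    case True then show ?thesis using fnl x by blast
  next
    case False
    have "real q + 1 \<le> Fm p q N x" using False out b by (auto simp: Fm_def)
    then obtain m where "(Fm p q N ^^ m) (Fm p q N x) = real q + 1"
      using fnl Dset_Fm[OF pq N x] by blast
    then have "(Fm p q N ^^ Suc m) x = real q + 1" by (simp add: funpow_swap1)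
    then show ?thesis by blast
  qed
qed

theorem reach_iff:
  assumes pq: "0 < p" "p < q" and N: "0 < N" "p dvd N" and x: "x \<in> Dset N"
  shows "(\<exists>n. (Fm p q N ^^ n) x = real q + 1) \<longleftrightarrow>
         \<not> (\<forall>n. (Tm (real p / real q) ^^ n) x \<in> {0..Ur p q})"
proof
  assume "\<exists>n. (Fm p q N ^^ n) x = real q + 1"
  then obtain n where n: "(Fm p q N ^^ n) x = real q + 1" by blast
  show "\<not> (\<forall>n. (Tm (real p / real q) ^^ n) x \<in> {0..Ur p q})"
  proof
    assume st: "\<forall>n. (Tm (real p / real q) ^^ n) x \<in> {0..Ur p q}"
    have "(Fm p q N ^^ n) x = (Tm (real p / real q) ^^ n) x" for n
    proof (induction n)
      case (Suc n) then show ?case using Fm_I[OF pq st[rule_format, of n]] by simp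
    qed simp
    then show False using n st[rule_format, of n] Ur_bounds[OF pq] by simp
  qed
next
  assume "\<not> (\<forall>n. (Tm (real p / real q) ^^ n) x \<in> {0..Ur p q})"
  then obtain n where n: "(Tm (real p / real q) ^^ n) x \<notin> {0..Ur p q}" by blast
  have "\<And>x. x \<in> Dset N \<Longrightarrow> (Tm (real p / real q) ^^ n) x \<notin> {0..Ur p q} \<Longrightarrow>
            \<exists>m. (Fm p q N ^^ m) x = real q + 1"
  proof (induction n)
    case 0 then show ?case using escape[OF pq N] by simp
  next
    case (Suc n)
    fix x assume x: "x \<in> Dset N" and ot: "(Tm (real p / real q) ^^ Suc n) x \<notin> {0..Ur p q}"
    show "\<exists>m. (Fm p q N ^^ m) x = real q + 1"
    proof (cases "x \<in> {0..Ur p q}")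
      case False then show ?thesis using escape[OF pq N x] by blast
    next
      case True
      have F: "Fm p q N x = Tm (real p / real q) x" using Fm_I[OF pq True] .
      have "(Tm (real p / real q) ^^ n) (Fm p q N x) \<notin> {0..Ur p q}"
        using ot F by (simp add: funpow_swap1)
      then obtain m where "(Fm p q N ^^ m) (Fm p q N x) = real q + 1"
        using Suc.IH Dset_Fm[OF pq N x] by blast
      then have "(Fm p q N ^^ Suc m) x = real q + 1" by (simp add: funpow_swap1)
      then show ?thesis by blast
    qed
  qed
  then show "\<exists>n. (Fm p q N ^^ n) x = real q + 1" using x n by blast
qed

lemma rcf_shift: "rcf k F \<Longrightarrow> rcf (Suc k) (\<lambda>ys. F (tl ys))"
proof -
  assume F: "rcf k F"
  have A: "rcf (Suc k) (\<lambda>ys. F (map (\<lambda>G. G ys) (map (\<lambda>j ys. ys ! Suc j) [0..<k])))"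
    by (rule rcf_comp[OF F]) (auto intro: rcf_proj)
  have B: "map (\<lambda>j. ys ! Suc j) [0..<k] = tl ys" if "length ys = Suc k" for ys
    using that by (intro nth_equalityI) (auto simp: nth_tl)
  show ?thesis by (rule rcf_cong[OF A]) (simp add: B comp_def)
qed

lemma rcf_comp4:
  assumes "rcf 4 H" "rcf k F1" "rcf k F2" "rcf k F3" "rcf k F4"
  shows "rcf k (\<lambda>xs. H [F1 xs, F2 xs, F3 xs, F4 xs])"
  using rcf_comp[OF assms(1), of "[F1, F2, F3, F4]" k] assms(2-5) by simp

definition lenc4 :: "nat \<Rightarrow> nat \<Rightarrow> nat \<Rightarrow> nat \<Rightarrow> nat" where
  "lenc4 a b c d = Suc (prod_encode (a, Suc (prod_encode (b, Suc (prod_encode (c, Suc (prod_encode (d, 0))))))))"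

lemma lenc4_eq: "list_encode [a, b, c, d] = lenc4 a b c d"
  by (simp add: lenc4_def)

lemma rcf_lenc4:
  "rcf k A \<Longrightarrow> rcf k B \<Longrightarrow> rcf k C \<Longrightarrow> rcf k D \<Longrightarrow> rcf k (\<lambda>xs. lenc4 (A xs) (B xs) (C xs) (D xs))"
  unfolding lenc4_def by (intro rcf_intros rcf_prod_encode; assumption)

definition lhd :: "nat \<Rightarrow> nat" where "lhd m = pdec1 (m - 1)"
definition ltl :: "nat \<Rightarrow> nat" where "ltl m = pdec2 (m - 1)"

lemma rcf_lhd: "rcf k F \<Longrightarrow> rcf k (\<lambda>xs. lhd (F xs))"
  unfolding lhd_def by (intro rcf_pdec1 rcf_intros)
lemma rcf_ltl: "rcf k F \<Longrightarrow> rcf k (\<lambda>xs. ltl (F xs))"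
  unfolding ltl_def by (intro rcf_pdec2 rcf_intros)

definition cc :: "nat \<Rightarrow> nat \<Rightarrow> nat" where "cc i n = lhd ((ltl ^^ i) n)"

lemma cc_simps: "cc 0 n = lhd n" "cc 1 n = lhd (ltl n)" "cc 2 n = lhd (ltl (ltl n))"
  "cc 3 n = lhd (ltl (ltl (ltl n)))"
  by (simp_all add: cc_def numeral_3_eq_3 numeral_2_eq_2)

lemma cc_lenc4: "cc 0 (lenc4 a b c d) = a" "cc 1 (lenc4 a b c d) = b"
  "cc 2 (lenc4 a b c d) = c" "cc 3 (lenc4 a b c d) = d"
  unfolding cc_def by (simp_all add: lenc4_def lhd_def ltl_def numeral_3_eq_3 numeral_2_eq_2)

definition shape :: "nat \<Rightarrow> bool" where
  "shape n \<longleftrightarrow> n = lenc4 (cc 0 n) (cc 1 n) (cc 2 n) (cc 3 n)"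

lemma rcf_cc: "rcf k F \<Longrightarrow> rcf k (\<lambda>xs. cc 0 (F xs))" "rcf k F \<Longrightarrow> rcf k (\<lambda>xs. cc 1 (F xs))"
  "rcf k F \<Longrightarrow> rcf k (\<lambda>xs. cc 2 (F xs))" "rcf k F \<Longrightarrow> rcf k (\<lambda>xs. cc 3 (F xs))"
  unfolding cc_simps by (intro rcf_lhd rcf_ltl; assumption)+

definition validT :: "nat \<Rightarrow> bool" where
  "validT n \<longleftrightarrow> shape n \<and> rvalid (cc 0 n) \<and> rvalid (cc 1 n) \<and> rvalid (cc 2 n) \<and> rvalid (cc 3 n)
     \<and> rnn (cc 0 n) = 0 \<and> 0 < rnp (cc 0 n) \<and> rnp (cc 0 n) < rdp (cc 0 n)"

lemma rcp_validT: "rcp 1 (\<lambda>xs. validT (xs ! 0))"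
  unfolding validT_def shape_def
  by (intro rcf_intros rcp_rvalid rcf_cc rcf_rnn rcf_rnp rcf_rdp rcf_lenc4; simp)

definition gp :: "nat list \<Rightarrow> nat" where "gp v = rnp (v ! 0)"
definition gq :: "nat list \<Rightarrow> nat" where "gq v = rdp (v ! 0)"
definition tp :: "nat list \<Rightarrow> nat" where "tp v = rnp (v ! 1)"
definition tn :: "nat list \<Rightarrow> nat" where "tn v = rnn (v ! 1)"
definition tq :: "nat list \<Rightarrow> nat" where "tq v = rdp (v ! 1)"
definition ap :: "nat list \<Rightarrow> nat" where "ap v = rnp (v ! 2)"
definition an :: "nat list \<Rightarrow> nat" where "an v = rnn (v ! 2)"
definition aq :: "nat list \<Rightarrow> nat" where "aq v = rdp (v ! 2)"
definition bp :: "nat list \<Rightarrow> nat" where "bp v = rnp (v ! 3)"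
definition bn :: "nat list \<Rightarrow> nat" where "bn v = rnn (v ! 3)"
definition bq :: "nat list \<Rightarrow> nat" where "bq v = rdp (v ! 3)"

lemma rcf_basic: "rcf 4 gp" "rcf 4 gq" "rcf 4 tp" "rcf 4 tn" "rcf 4 tq" "rcf 4 ap" "rcf 4 an" "rcf 4 aq"
  "rcf 4 bp" "rcf 4 bn" "rcf 4 bq"
  unfolding gp_def gq_def tp_def tn_def tq_def ap_def an_def aq_def bp_def bn_def bq_def
  by (intro rcf_rnp rcf_rnn rcf_rdp rcf_proj; simp)+

definition Xp :: "nat list \<Rightarrow> nat" where "Xp v = tp v * (gq v - gp v) * aq v + an v * gq v * tq v"
definition Xn :: "nat list \<Rightarrow> nat" where "Xn v = tn v * (gq v - gp v) * aq v + ap v * gq v * tq v"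
definition Yp :: "nat list \<Rightarrow> nat" where "Yp v = bp v * aq v + an v * bq v"
definition Yn :: "nat list \<Rightarrow> nat" where "Yn v = bn v * aq v + ap v * bq v"
definition nump :: "nat list \<Rightarrow> nat" where "nump v = Xp v * bq v"
definition numn :: "nat list \<Rightarrow> nat" where "numn v = Xn v * bq v"
definition denp :: "nat list \<Rightarrow> nat" where "denp v = tq v * (gq v - gp v) * Yp v"
definition denn :: "nat list \<Rightarrow> nat" where "denn v = tq v * (gq v - gp v) * Yn v"

lemma rcf_X: "rcf 4 Xp" "rcf 4 Xn" "rcf 4 Yp" "rcf 4 Yn"
  unfolding Xp_def Xn_def Yp_def Yn_def by (intro rcf_intros rcf_basic)+
lemma rcf_num: "rcf 4 nump" "rcf 4 numn" "rcf 4 denp" "rcf 4 denn"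
  unfolding nump_def numn_def denp_def denn_def by (intro rcf_intros rcf_basic rcf_X)+

definition srel :: "nat \<Rightarrow> nat list \<Rightarrow> bool" where
  "srel c v \<longleftrightarrow> rvalid c \<and> rnp c * denp v + rnn c * denn v + numn v * rdp c =
                               rnp c * denn v + rnn c * denp v + nump v * rdp c"

definition sbound :: "nat list \<Rightarrow> nat" where
  "sbound v = Suc (prod_encode (2 * (nump v + numn v), 2 * (denp v + denn v)))"

definition scode :: "nat list \<Rightarrow> nat" where
  "scode v = (\<Sum>c<sbound v. if srel c v then c else 0)"

lemma rcf_scode: "rcf 4 scode"
proof -
  note s = rcf_shift[OF rcf_num(1)] rcf_shift[OF rcf_num(2)] rcf_shift[OF rcf_num(3)] rcf_shift[OF rcf_num(4)]
  show ?thesis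
    unfolding scode_def sbound_def srel_def
    by (intro rcf_intros rcf_prod_encode rcf_num rcp_rvalid rcf_rnp rcf_rnn rcf_rdp rcf_hd s; simp)
qed

definition NN :: "nat list \<Rightarrow> nat" where "NN v = 2 * gp v * rdp (scode v)"

lemma rcf_NN: "rcf 4 NN" unfolding NN_def by (intro rcf_intros rcf_basic rcf_scode rcf_rdp)

definition rc_nat :: "nat \<Rightarrow> nat" where "rc_nat k = prod_encode (2 * k, 2)"
definition rc_neg :: "nat \<Rightarrow> nat" where "rc_neg k = prod_encode (2 * k - 1, 2)"
definition rc_frac :: "nat \<Rightarrow> nat \<Rightarrow> nat" where "rc_frac a b = prod_encode (2 * a, 2 * b)"
definition rc_negfrac :: "nat \<Rightarrow> nat \<Rightarrow> nat" where "rc_negfrac a b = prod_encode (2 * a - 1, 2 * b)"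
definition bnd :: "nat \<Rightarrow> nat \<Rightarrow> nat" where "bnd r c = Suc (prod_encode (r, c))"

definition Rc :: "nat \<Rightarrow> nat \<Rightarrow> nat \<Rightarrow> nat \<Rightarrow> nat" where
  "Rc p q N cs = prod_encode (
     Suc (prod_encode (lenc4 0 (bnd (rc_nat 0) 0) (rc_neg 1) (rc_nat (q + 2)),
     Suc (prod_encode (lenc4 (bnd (rc_nat 0) 1) (bnd (rc_nat 1) 0) (rc_frac q p) (rc_nat 0),
     Suc (prod_encode (lenc4 (bnd (rc_nat 1) 1) (bnd (rc_frac q (q - p)) 1) (rc_frac q p) (rc_negfrac q p),
     Suc (prod_encode (lenc4 (bnd (rc_frac q (q - p)) 0) (bnd (rc_nat (q + 1)) 0) (rc_nat 1) (rc_nat (q + 1)),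
     Suc (prod_encode (lenc4 (bnd (rc_nat (q + 1)) 1) (bnd (rc_nat (q + 2)) 0) (rc_nat N) (rc_neg ((N - 1) * (q + 1))),
     Suc (prod_encode (lenc4 (bnd (rc_nat (q + 2)) 1) 0 (rc_nat 1) (rc_neg 1), 0)))))))))))),
     prod_encode (cs, rc_nat (q + 1)))"

definition Rcode :: "nat list \<Rightarrow> nat" where "Rcode v = Rc (gp v) (gq v) (NN v) (scode v)"

lemma rcf_Rcode: "rcf 4 Rcode"
  unfolding Rcode_def Rc_def rc_nat_def rc_neg_def rc_frac_def rc_negfrac_def bnd_def
  by (intro rcf_intros rcf_prod_encode rcf_lenc4 rcf_basic rcf_NN rcf_scode)

definition Dec :: "(nat \<Rightarrow> nat) \<Rightarrow> nat list \<Rightarrow> nat" where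
  "Dec chi v = (if v ! 2 = v ! 3 then (if Xp v = Xn v then 1 else 0) else 1 - chi (Rcode v))"

lemma rcf_Dec:
  assumes chi: "rcf 1 (\<lambda>xs. chi (xs ! 0))"
  shows "rcf 4 (Dec chi)"
proof -
  have "rcf 4 (\<lambda>v. Dec chi v)"
    unfolding Dec_def
    by (intro rcf_intros rcf_X rcf_lift1[OF chi] rcf_Rcode; simp)
  then show ?thesis by simp
qed

definition Dfun :: "(nat \<Rightarrow> nat) \<Rightarrow> nat \<Rightarrow> nat" where
  "Dfun chi n = (if validT n then Dec chi [cc 0 n, cc 1 n, cc 2 n, cc 3 n] else 0)"

lemma rcf_Dfun:
  assumes chi: "rcf 1 (\<lambda>xs. chi (xs ! 0))"
  shows "rcf 1 (\<lambda>xs. Dfun chi (xs ! 0))"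
  unfolding Dfun_def
  by (intro rcf_If rcp_lift1[OF rcp_validT] rcf_comp4[OF rcf_Dec[OF chi]] rcf_cc rcf_proj rcf_const; simp)

lemma int_encode_nat: "int_encode (int k) = 2 * k"
  by (simp add: int_encode_def sum_encode_def)

lemma int_encode_neg: "0 < k \<Longrightarrow> int_encode (- int k) = 2 * k - 1"
  by (simp add: int_encode_def sum_encode_def nat_diff_distrib)

lemma rat_code_nat: "rat_code (of_nat k) = rc_nat k"
  by (simp add: rat_code_def rc_nat_def int_encode_nat quotient_of_rat_of_nat
      int_encode_nat[of 1, simplified])

lemma rat_code_negnat: "0 < k \<Longrightarrow> rat_code (- of_nat k) = rc_neg k"
proof -
  assume k: "0 < k"
  have "- (of_nat k :: rat) = of_int (- int k)" by simp
  then have "quotient_of (- of_nat k) = (- int k, 1)" by (simp only: quotient_of_rat_of_int)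
  then show ?thesis using k
    by (simp add: rat_code_def rc_neg_def int_encode_neg int_encode_nat[of 1, simplified])
qed

lemma rat_code_frac:
  assumes "0 < b" "coprime a b"
  shows "rat_code (of_nat a / of_nat b) = rc_frac a b"
proof -
  have "(of_nat a / of_nat b :: rat) = Fract (int a) (int b)" by (simp add: Fract_of_int_quotient)
  moreover have "coprime (int a) (int b)" using assms(2) by (simp add: coprime_int_iff)
  ultimately have "quotient_of (of_nat a / of_nat b) = (int a, int b)"
    using assms(1) by (simp add: quotient_of_Fract)
  then show ?thesis by (simp add: rat_code_def rc_frac_def int_encode_nat)
qed

lemma rat_code_negfrac:
  assumes "0 < b" "0 < a" "coprime a b"
  shows "rat_code (- (of_nat a / of_nat b)) = rc_negfrac a b"
proof -
  have "- (of_nat a / of_nat b :: rat) = Fract (- int a) (int b)" by (simp add: Fract_of_int_quotient)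
  moreover have "coprime (- int a) (int b)" using assms(3) by (simp add: coprime_int_iff)
  ultimately have "quotient_of (- (of_nat a / of_nat b)) = (- int a, int b)"
    using assms(1) by (simp add: quotient_of_Fract)
  then show ?thesis using assms by (simp add: rat_code_def rc_negfrac_def int_encode_nat int_encode_neg)
qed

lemma coprime_sub:
  assumes "coprime p q" "p \<le> (q::nat)"
  shows "coprime q (q - p)"
proof (rule coprimeI)
  fix c assume c: "c dvd q" "c dvd q - p"
  then have "c dvd q - (q - p)" by (simp add: dvd_diff_nat)
  then have "c dvd p" using assms(2) by simp
  then show "is_unit c" using c(1) assms(1) coprime_common_divisor by blast
qed

lemma Rc_eq:
  assumes pq: "0 < p" "p < q" "coprime p q" and N: "2 \<le> N"
  shows "Rc p q N (rat_code s) = reach_code (secs p q N) s (of_nat q + 1)"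
proof -
  have e1: "(of_nat q + 2 :: rat) = of_nat (q + 2)" by simp
  have e2: "(of_nat q + 1 :: rat) = of_nat (q + 1)" by simp
  have e3: "(of_nat q + 1 - of_nat N * (of_nat q + 1) :: rat) = - of_nat ((N - 1) * (q + 1))"
  proof -
    have "(of_nat ((N - 1) * (q + 1)) :: rat) = (of_nat N - 1) * (of_nat q + 1)"
      using N by (simp only: of_nat_mult of_nat_diff[of 1 N]) simp
    then show ?thesis by (simp add: algebra_simps)
  qed
  have e4: "(-1 :: rat) = - of_nat 1" by simp
  have c1: "rat_code (of_nat q / of_nat p) = rc_frac q p"
    using pq by (intro rat_code_frac) (auto simp: coprime_commute)
  have c2: "rat_code (- (of_nat q / of_nat p)) = rc_negfrac q p"
    using pq by (intro rat_code_negfrac) (auto simp: coprime_commute)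
  have c3: "rat_code (of_nat q / of_nat (q - p)) = rc_frac q (q - p)"
    using pq coprime_sub[of p q] by (intro rat_code_frac) auto
  have c4: "rat_code (- of_nat ((N - 1) * (q + 1))) = rc_neg ((N - 1) * (q + 1))"
    using N by (intro rat_code_negnat) simp
  have c5: "rat_code (- 1) = rc_neg 1" using rat_code_negnat[of 1] by simp
  have c6: "rat_code (of_nat q + 1 - of_nat N * (of_nat q + 1)) = rc_neg ((N - 1) * (q + 1))"
    using c4 e3 by simp
  have c0: "rat_code 0 = rc_nat 0" "rat_code 1 = rc_nat 1"
    using rat_code_nat[of 0] rat_code_nat[of 1] by simp_all
  show ?thesis
    unfolding Rc_def reach_code_def secs_def e3 e1 e2
    by (simp add: sec_code_def lenc4_def bnd_def c1 c2 c3 c4 c5 c0 rat_code_nat del: of_nat_add of_nat_Suc)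
       (use c6 in \<open>simp add: add.commute\<close>)
qed

section \<open>Injectivity of encodings\<close>

lemma tds_code_lenc: "tds_code l t a b = lenc4 (rat_code l) (rat_code t) (rat_code a) (rat_code b)"
  by (simp add: tds_code_def lenc4_def)

lemma lenc4_inj: "lenc4 a b c d = lenc4 a' b' c' d' \<Longrightarrow> a = a' \<and> b = b' \<and> c = c' \<and> d = d'"
  by (simp add: lenc4_def)

lemma tds_code_inj:
  "tds_code l t a b = tds_code l' t' a' b' \<Longrightarrow> l = l' \<and> t = t' \<and> a = a' \<and> b = b'"
  unfolding tds_code_lenc by (auto dest!: lenc4_inj simp: rat_code_inj)

lemma bound_code_inj: "bound_code x = bound_code y \<Longrightarrow> x = y"
  by (cases x; cases y) (auto simp: rat_code_inj split: if_splits)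

lemma sec_code_inj: "sec_code x = sec_code y \<Longrightarrow> x = y"
  by (cases x; cases y) (auto simp: sec_code_def list_encode_eq rat_code_inj dest!: bound_code_inj)

lemma reach_code_inj:
  assumes "reach_code ss s t = reach_code ss' s' t'"
  shows "ss = ss' \<and> s = s' \<and> t = t'"
proof -
  have "map sec_code ss = map sec_code ss'" "rat_code s = rat_code s'" "rat_code t = rat_code t'"
    using assms by (auto simp: reach_code_def list_encode_eq)
  moreover have "inj sec_code" by (auto intro: injI sec_code_inj)
  ultimately show ?thesis by (auto simp: rat_code_inj inj_map_eq_map)
qed

lemma mem_PAM:
  "reach_code ss s t \<in> PAM_REACH \<longleftrightarrow>
     pam_valid ss \<and> (\<exists>n. (pam_apply ss ^^ n) (of_rat s) = of_rat t)"
  unfolding PAM_REACH_def by (auto dest!: reach_code_inj)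

lemma mem_TDS: "tds_code l t a b \<in> TDS \<longleftrightarrow> tds_yes l t a b"
  unfolding TDS_def by (auto dest!: tds_code_inj)

section \<open>Real algebra\<close>

lemma same_alg:
  fixes t1 t2 t3 a1 a2 a3 p q :: real
  assumes "t3 > 0" "a3 > 0" "0 < p" "p < q"
  shows "(t1 - t2) / t3 = ((a1 - a2) / a3) / (1 - p / q) \<longleftrightarrow>
         t1 * (q - p) * a3 + a2 * q * t3 = a1 * q * t3 + t2 * (q - p) * a3"
proof -
  have q: "q > 0" "q - p > 0" using assms by auto
  have "1 - p / q = (q - p) / q" using q by (simp add: field_simps)
  then have "((a1 - a2) / a3) / (1 - p / q) = (a1 - a2) * q / (a3 * (q - p))"
    using q assms by (simp add: field_simps)
  then have "(t1 - t2) / t3 = ((a1 - a2) / a3) / (1 - p / q) \<longleftrightarrow>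
             (t1 - t2) * (a3 * (q - p)) = (a1 - a2) * q * t3"
    using q assms by (simp add: field_simps)
  also have "\<dots> \<longleftrightarrow> t1 * (q - p) * a3 + a2 * q * t3 = a1 * q * t3 + t2 * (q - p) * a3"
    by (simp add: algebra_simps) linarith?
  finally show ?thesis .
qed

lemma s_alg:
  fixes t1 t2 t3 a1 a2 a3 b1 b2 b3 p q :: real
  assumes "t3 > 0" "a3 > 0" "b3 > 0" "0 < p" "p < q"
    and ab: "(a1 - a2) / a3 \<noteq> (b1 - b2) / b3"
  defines "X1 \<equiv> t1 * (q - p) * a3 + a2 * q * t3"
    and "X2 \<equiv> t2 * (q - p) * a3 + a1 * q * t3"
    and "Y1 \<equiv> b1 * a3 + a2 * b3" and "Y2 \<equiv> b2 * a3 + a1 * b3"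
  shows "t3 * (q - p) * Y1 - t3 * (q - p) * Y2 \<noteq> 0"
    and "((t1 - t2) / t3 - ((a1 - a2) / a3) / (1 - p / q)) / ((b1 - b2) / b3 - (a1 - a2) / a3) =
         (X1 * b3 - X2 * b3) / (t3 * (q - p) * Y1 - t3 * (q - p) * Y2)"
proof -
  have q: "q > 0" "q - p > 0" using assms by auto
  define E where "E = (t1 - t2) / t3 - ((a1 - a2) / a3) / (1 - p / q)"
  define F where "F = (b1 - b2) / b3 - (a1 - a2) / a3"
  have Fne: "F \<noteq> 0" using ab unfolding F_def by simp
  have Y: "Y1 - Y2 = F * (a3 * b3)"
    using assms(2,3) unfolding Y1_def Y2_def F_def by (simp add: field_simps)
  have Yne: "Y1 - Y2 \<noteq> 0" using Y Fne assms(2,3) by simp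
  show D: "t3 * (q - p) * Y1 - t3 * (q - p) * Y2 \<noteq> 0"
    using Yne q assms(1) by (simp add: right_diff_distrib[symmetric])
  have X: "X1 - X2 = E * (t3 * a3 * (q - p))"
  proof -
    have "1 - p / q = (q - p) / q" using q by (simp add: field_simps)
    then show ?thesis using q assms(1,2) unfolding X1_def X2_def E_def by (simp add: field_simps)
  qed
  have num: "X1 * b3 - X2 * b3 = E * (t3 * a3 * (q - p) * b3)"
    using X by (simp add: left_diff_distrib[symmetric] ac_simps)
  have den: "t3 * (q - p) * Y1 - t3 * (q - p) * Y2 = F * (t3 * a3 * (q - p) * b3)"
  proof -
    have "t3 * (q - p) * Y1 - t3 * (q - p) * Y2 = t3 * (q - p) * (Y1 - Y2)" by (simp add: algebra_simps)
    also have "\<dots> = F * (t3 * a3 * (q - p) * b3)" unfolding Y by (simp add: ac_simps)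
    finally show ?thesis .
  qed
  have K: "t3 * a3 * (q - p) * b3 \<noteq> 0" using q assms(1,2,3) by simp
  have "(X1 * b3 - X2 * b3) / (t3 * (q - p) * Y1 - t3 * (q - p) * Y2) = E / F"
    unfolding num den using K by simp
  then show "((t1 - t2) / t3 - ((a1 - a2) / a3) / (1 - p / q)) / ((b1 - b2) / b3 - (a1 - a2) / a3) =
         (X1 * b3 - X2 * b3) / (t3 * (q - p) * Y1 - t3 * (q - p) * Y2)"
    unfolding E_def F_def by simp
qed

lemma cross:
  fixes cp cn cq dp dn np nn :: nat
  assumes "0 < cq" "dp \<noteq> dn"
  shows "(cp * dp + cn * dn + nn * cq = cp * dn + cn * dp + np * cq) \<longleftrightarrow>
         (real cp - real cn) / real cq = (real np - real nn) / (real dp - real dn)"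
proof -
  have d: "real dp - real dn \<noteq> 0" "real cq \<noteq> 0" using assms by auto
  have "(cp * dp + cn * dn + nn * cq = cp * dn + cn * dp + np * cq) \<longleftrightarrow>
        real (cp * dp + cn * dn + nn * cq) = real (cp * dn + cn * dp + np * cq)"
    by (simp only: of_nat_eq_iff)
  also have "\<dots> \<longleftrightarrow> (real cp - real cn) * (real dp - real dn) = (real np - real nn) * real cq"
  proof -
    have e1: "(real cp - real cn) * (real dp - real dn) = real cp * real dp + real cn * real dn - real cp * real dn - real cn * real dp"
      by (simp add: algebra_simps)
    have e2: "(real np - real nn) * real cq = real np * real cq - real nn * real cq"
      by (simp add: algebra_simps)
    show ?thesis unfolding e1 e2 by simp linarith
  qed
  also have "\<dots> \<longleftrightarrow> (real cp - real cn) / real cq = (real np - real nn) / (real dp - real dn)"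
    using d by (simp add: field_simps)
  finally show ?thesis .
qed

lemma int_encode_le: "int_encode x \<le> 2 * nat \<bar>x\<bar>"
  by (auto simp: int_encode_def sum_encode_def)

lemma prod_encode_mono: "a \<le> a' \<Longrightarrow> b \<le> b' \<Longrightarrow> prod_encode (a, b) \<le> prod_encode (a', b')"
  by (simp add: prod_encode_def triangle_def, intro add_mono div_le_mono mult_le_mono) auto

lemma code_bound:
  fixes np nn dp dn :: nat
  assumes d: "dp \<noteq> dn" and S: "of_rat S = (real np - real nn) / (real dp - real dn)"
  shows "rat_code S \<le> prod_encode (2 * (np + nn), 2 * (dp + dn))"
proof -
  obtain P Q where pq: "quotient_of S = (P, Q)" by (cases "quotient_of S")
  have Q: "Q > 0" using quotient_of_denom_pos[OF pq] .
  have cp: "coprime P Q" using quotient_of_coprime[OF pq] .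
  have SPQ: "S = of_int P / of_int Q" using quotient_of_div[OF pq] .
  define Nm where "Nm = int np - int nn"
  define Dn where "Dn = int dp - int dn"
  have Dn0: "Dn \<noteq> 0" using d by (simp add: Dn_def)
  have "real_of_int P / real_of_int Q = real_of_int Nm / real_of_int Dn"
    using S SPQ by (simp add: Nm_def Dn_def of_rat_divide)
  then have "real_of_int (P * Dn) = real_of_int (Nm * Q)"
    using Q Dn0 by (simp add: field_simps)
  then have eq: "P * Dn = Nm * Q" by (simp only: of_int_eq_iff)
  have "Q dvd P * Dn" using eq by simp
  then have "Q dvd Dn" using cp by (simp add: coprime_commute coprime_dvd_mult_right_iff)
  then have "Q dvd \<bar>Dn\<bar>" by simp
  then have QD: "Q \<le> \<bar>Dn\<bar>" by (rule zdvd_imp_le) (use Dn0 in simp)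
  have "\<bar>P\<bar> * \<bar>Dn\<bar> = \<bar>Nm\<bar> * Q" using eq Q by (metis abs_mult abs_of_pos)
  also have "\<dots> \<le> \<bar>Nm\<bar> * \<bar>Dn\<bar>" using QD by (simp add: mult_left_mono)
  finally have PN: "\<bar>P\<bar> \<le> \<bar>Nm\<bar>" using Dn0 by simp
  have "\<bar>Nm\<bar> \<le> int np + int nn" unfolding Nm_def by simp
  then have a1: "int_encode P \<le> 2 * (np + nn)" using PN int_encode_le[of P] by simp
  have "\<bar>Dn\<bar> \<le> int dp + int dn" unfolding Dn_def by simp
  then have a2: "int_encode Q \<le> 2 * (dp + dn)" using QD Q int_encode_le[of Q] by simp
  show ?thesis unfolding rat_code_def pq fst_conv snd_conv by (rule prod_encode_mono[OF a1 a2])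
qed

lemma of_rat_code_value:
  "of_rat r = (real (rnp (rat_code r)) - real (rnn (rat_code r))) / real (rdp (rat_code r))"
proof -
  have "of_rat r = (of_rat ((of_int (int (rnp (rat_code r)) - int (rnn (rat_code r))) / of_int (int (rdp (rat_code r))))) :: real)"
    using rat_code_value[OF refl, of r] by simp
  then show ?thesis by (simp add: of_rat_divide of_rat_diff)
qed

lemma main_valid:
  fixes l t a b :: rat and p q :: nat
  assumes v: "v = [rat_code l, rat_code t, rat_code a, rat_code b]"
    and lq: "quotient_of l = (int p, int q)" and pq: "0 < p" "p < q"
  shows "Dec (\<lambda>m. if m \<in> PAM_REACH then 1 else 0) v = (if tds_yes l t a b then 1 else 0)"
proof -
  let ?c0 = "rat_code l"
  have pl: "int (rnp ?c0) - int (rnn ?c0) = int p" "int (rdp ?c0) = int q"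
    using rat_code_parts(1)[OF refl, of l] lq by simp_all
  have "rnp ?c0 = 0 \<or> rnn ?c0 = 0" using rat_code_parts(4)[OF refl, of l] .
  then have "rnp ?c0 = p" using pl(1) pq by auto
  then have gp: "gp v = p" by (simp add: gp_def v)
  have gq: "gq v = q" using pl(2) by (simp add: gq_def v)
  have cpq: "coprime p q" using quotient_of_coprime[OF lq] by (simp add: coprime_int_iff)
  have lrat: "l = of_int (int p) / of_int (int q)" using quotient_of_div[OF lq] .
  have lreal: "of_rat l = real p / real q" using lrat by (simp add: of_rat_divide)
  have l01: "0 < l" "l < 1" using pq by (simp_all add: lrat)
  have lr01: "0 < real p / real q" "real p / real q < 1" using pq by simp_all
  have yes: "tds_yes l t a b \<longleftrightarrow>
      (\<exists>w. (\<forall>i. w i \<in> {of_rat a, of_rat b}) \<and> (\<lambda>i. w i * (real p / real q) ^ i) sums of_rat t)"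
    unfolding tds_yes_def using l01 lreal by simp
  have tval: "of_rat t = (real (tp v) - real (tn v)) / real (tq v)"
    using of_rat_code_value[of t] by (simp add: tp_def tn_def tq_def v)
  have aval: "of_rat a = (real (ap v) - real (an v)) / real (aq v)"
    using of_rat_code_value[of a] by (simp add: ap_def an_def aq_def v)
  have bval: "of_rat b = (real (bp v) - real (bn v)) / real (bq v)"
    using of_rat_code_value[of b] by (simp add: bp_def bn_def bq_def v)
  have pos: "real (tq v) > 0" "real (aq v) > 0" "real (bq v) > 0"
    using rat_code_parts(3)[OF refl, of t] rat_code_parts(3)[OF refl, of a] rat_code_parts(3)[OF refl, of b]
    by (simp_all add: tq_def aq_def bq_def v)
  have qp: "real (q - p) = real q - real p" using pq by (simp add: of_nat_diff)
  have rXp: "real (Xp v) = real (tp v) * (real q - real p) * real (aq v) + real (an v) * real q * real (tq v)"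
    by (simp add: Xp_def gp gq qp)
  have rXn: "real (Xn v) = real (tn v) * (real q - real p) * real (aq v) + real (ap v) * real q * real (tq v)"
    by (simp add: Xn_def gp gq qp)
  show ?thesis
  proof (cases "a = b")
    case True
    have v23: "v ! 2 = v ! 3" using True by (simp add: v)
    have "Xp v = Xn v \<longleftrightarrow> real (Xp v) = real (Xn v)" by (simp only: of_nat_eq_iff)
    also have "\<dots> \<longleftrightarrow> of_rat t = of_rat a / (1 - real p / real q)"
      unfolding rXp rXn tval aval
      using same_alg[OF pos(1) pos(2), of "real p" "real q" "real (tp v)" "real (tn v)" "real (ap v)" "real (an v)"] pq
      by (simp add: ac_simps)
    also have "\<dots> \<longleftrightarrow> tds_yes l t a b"
      using yes tds_same[OF lr01] True by simp
    finally show ?thesis unfolding Dec_def using v23 by simp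
  next
    case False
    have v23: "v ! 2 \<noteq> v ! 3" using False by (simp add: v rat_code_inj)
    define S where "S = (t - a / (1 - l)) / (b - a)"
    have Sreal: "of_rat S = (of_rat t - of_rat a / (1 - real p / real q)) / (of_rat b - of_rat a)"
      unfolding S_def by (simp add: of_rat_divide of_rat_diff lreal)
    have abr: "(real (ap v) - real (an v)) / real (aq v) \<noteq> (real (bp v) - real (bn v)) / real (bq v)"
      using False aval bval by (metis of_rat_eq_iff)
    have rpq: "0 < real p" "real p < real q" using pq by simp_all
    note sa1 = s_alg(1)[OF pos rpq abr]
    note sa2 = s_alg(2)[OF pos rpq abr, of "real (tp v)" "real (tn v)"]
    have rnum: "real (nump v) = (real (tp v) * (real q - real p) * real (aq v) + real (an v) * real q * real (tq v)) * real (bq v)"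
      by (simp add: nump_def rXp)
    have rnumn: "real (numn v) = (real (tn v) * (real q - real p) * real (aq v) + real (ap v) * real q * real (tq v)) * real (bq v)"
      by (simp add: numn_def rXn)
    have rden: "real (denp v) = real (tq v) * (real q - real p) * (real (bp v) * real (aq v) + real (an v) * real (bq v))"
      by (simp add: denp_def Yp_def gp gq qp)
    have rdenn: "real (denn v) = real (tq v) * (real q - real p) * (real (bn v) * real (aq v) + real (ap v) * real (bq v))"
      by (simp add: denn_def Yn_def gp gq qp)
    have Dne: "real (denp v) - real (denn v) \<noteq> 0"
      unfolding rden rdenn using sa1 pq by simp
    then have dne: "denp v \<noteq> denn v" by auto
    have Sval: "of_rat S = (real (nump v) - real (numn v)) / (real (denp v) - real (denn v))"
      unfolding Sreal tval aval bval rnum rnumn rden rdenn using sa2 pq by simp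
    \<comment> \<open>the search finds the code of S\<close>
    have srel_iff: "srel c v \<longleftrightarrow> c = rat_code S" for c
    proof
      assume sr: "srel c v"
      then obtain r where r: "c = rat_code r" using rvalid_iff by (auto simp: srel_def)
      have "rdp c > 0" using rat_code_parts(3)[OF r] .
      then have "(real (rnp c) - real (rnn c)) / real (rdp c) = (real (nump v) - real (numn v)) / (real (denp v) - real (denn v))"
        using sr cross[OF _ dne] by (simp add: srel_def)
      then have "of_rat r = (of_rat S :: real)" using of_rat_code_value[of r] r Sval by simp
      then show "c = rat_code S" using r by simp
    next
      assume c: "c = rat_code S"
      have "rdp c > 0" using rat_code_parts(3)[OF c] .
      moreover have "(real (rnp c) - real (rnn c)) / real (rdp c) = (real (nump v) - real (numn v)) / (real (denp v) - real (denn v))"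
        using of_rat_code_value[of S] c Sval by simp
      ultimately show "srel c v" using cross[OF _ dne] c rat_code_valid by (simp add: srel_def)
    qed
    have bnd: "rat_code S < sbound v"
      using code_bound[OF dne Sval] unfolding sbound_def by simp
    have sc: "scode v = rat_code S"
      unfolding scode_def using sum_unique[OF bnd, of "\<lambda>c. srel c v"] srel_iff by simp
    define N where "N = 2 * p * rdp (rat_code S)"
    have NN: "NN v = N" by (simp add: NN_def N_def gp sc)
    have rdpS: "rdp (rat_code S) > 0" using rat_code_parts(3)[OF refl, of S] .
    have N2: "2 \<le> N" using pq rdpS by (simp add: N_def)
    have Ndvd: "p dvd N" by (simp add: N_def)
    have Rc: "Rcode v = reach_code (secs p q N) S (of_nat q + 1)"
      unfolding Rcode_def gp gq NN sc using Rc_eq[OF pq cpq N2] .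
    have valid: "pam_valid (secs p q N)" using pam_valid_secs[OF pq] N2 by simp
    have FF: "pam_apply (secs p q N) = Fm p q N" using pam_apply_secs[OF pq] by auto
    have Sin: "of_rat S \<in> Dset N"
    proof -
      obtain P Q where PQ: "quotient_of S = (P, Q)" by (cases "quotient_of S")
      have Qd: "Q = int (rdp (rat_code S))" using rat_code_parts(1)[OF refl, of S] PQ by simp
      have "S = of_int P / of_int Q" using quotient_of_div[OF PQ] .
      then have e: "S * of_nat (rdp (rat_code S)) = of_int P" using rdpS by (simp add: Qd field_simps)
      have e2: "of_rat S * real (rdp (rat_code S)) = real_of_int P"
        using arg_cong[OF e, of "of_rat :: rat \<Rightarrow> real"] by (simp add: of_rat_mult)
      have "of_rat S * real N ^ 1 = real (2 * p) * (of_rat S * real (rdp (rat_code S)))"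
        by (simp add: N_def algebra_simps)
      also have "\<dots> = of_int (2 * int p * P)" unfolding e2 by simp
      finally have "of_rat S * real N ^ 1 = of_int (2 * int p * P)" .
      then show ?thesis unfolding Dset_def by (intro CollectI exI[of _ 1]) simp
    qed
    have "Rcode v \<in> PAM_REACH \<longleftrightarrow> (\<exists>n. (Fm p q N ^^ n) (of_rat S) = real q + 1)"
      unfolding Rc mem_PAM FF using valid by (simp add: of_rat_add)
    also have "\<dots> \<longleftrightarrow> \<not> (\<forall>n. (Tm (real p / real q) ^^ n) (of_rat S) \<in> {0..Ur p q})"
      using reach_iff[OF pq _ Ndvd Sin] N2 by simp
    also have "\<dots> \<longleftrightarrow> of_rat S \<notin> Cset (real p / real q)"
      using cantor_iff[OF lr01] Ur_eq[OF pq] by simp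
    also have "\<dots> \<longleftrightarrow> \<not> tds_yes l t a b"
      unfolding yes Sreal using tds_translate[OF lr01] False by (simp add: of_rat_eq_iff)
    finally show ?thesis unfolding Dec_def using v23 by simp
  qed
qed

lemma lam_code:
  assumes "0 < l" "l < 1"
  shows "rnn (rat_code l) = 0 \<and> 0 < rnp (rat_code l) \<and> rnp (rat_code l) < rdp (rat_code l)"
proof -
  let ?c = "rat_code l"
  obtain P Q where PQ: "quotient_of l = (P, Q)" by (cases "quotient_of l")
  have Q: "Q > 0" using quotient_of_denom_pos[OF PQ] .
  have l: "l = of_int P / of_int Q" using quotient_of_div[OF PQ] .
  have parts: "P = int (rnp ?c) - int (rnn ?c)" "Q = int (rdp ?c)"
    using rat_code_parts(1)[OF refl, of l] PQ by simp_all
  have "0 < P" using assms(1) Q unfolding l by (simp add: zero_less_divide_iff)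
  moreover have "P < Q" using assms(2) Q unfolding l by (simp add: divide_less_eq)
  moreover have "rnp ?c = 0 \<or> rnn ?c = 0" using rat_code_parts(4)[OF refl, of l] .
  ultimately show ?thesis using parts by auto
qed

lemma Dfun_correct:
  "Dfun (\<lambda>m. if m \<in> PAM_REACH then 1 else 0) n = (if n \<in> TDS then 1 else 0)"
proof (cases "validT n")
  case True
  let ?c0 = "cc 0 n" and ?c1 = "cc 1 n" and ?c2 = "cc 2 n" and ?c3 = "cc 3 n"
  have V: "shape n" "rvalid ?c0" "rvalid ?c1" "rvalid ?c2" "rvalid ?c3"
     "rnn ?c0 = 0" "0 < rnp ?c0" "rnp ?c0 < rdp ?c0"
    using True unfolding validT_def by auto
  obtain l where l: "?c0 = rat_code l" using V(2) rvalid_iff by auto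
  obtain t where t: "?c1 = rat_code t" using V(3) rvalid_iff by auto
  obtain a where a: "?c2 = rat_code a" using V(4) rvalid_iff by auto
  obtain b where b: "?c3 = rat_code b" using V(5) rvalid_iff by auto
  have n: "n = tds_code l t a b"
    using V(1) unfolding shape_def tds_code_lenc l t a b by simp
  have lq: "quotient_of l = (int (rnp ?c0), int (rdp ?c0))"
    using rat_code_parts(1)[OF l] V(6) by simp
  have "Dfun (\<lambda>m. if m \<in> PAM_REACH then 1 else 0) n =
        Dec (\<lambda>m. if m \<in> PAM_REACH then 1 else 0) [rat_code l, rat_code t, rat_code a, rat_code b]"
    unfolding Dfun_def using True l t a b by simp
  also have "\<dots> = (if tds_yes l t a b then 1 else 0)"
    by (rule main_valid[OF refl lq V(7,8)])
  finally show ?thesis unfolding n mem_TDS .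
next
  case False
  have "n \<notin> TDS"
  proof
    assume "n \<in> TDS"
    then obtain l t a b where n: "n = tds_code l t a b" and y: "tds_yes l t a b"
      unfolding TDS_def by auto
    have cc: "cc 0 n = rat_code l" "cc 1 n = rat_code t" "cc 2 n = rat_code a" "cc 3 n = rat_code b"
      unfolding n tds_code_lenc cc_lenc4 by simp_all
    have "shape n" unfolding shape_def cc unfolding n tds_code_lenc by simp
    moreover have "0 < l" "l < 1" using y unfolding tds_yes_def by auto
    ultimately have "validT n" unfolding validT_def cc using lam_code rat_code_valid by blast
    then show False using False by simp
  qed
  then show ?thesis using False unfolding Dfun_def by simp
qed

theorem theorem32:
  shows "\<not> decidable TDS \<longrightarrow> \<not> decidable PAM_REACH"
proof (intro impI notI)
  assume nd: "\<not> decidable TDS" and d: "decidable PAM_REACH"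
  define chi where "chi = (\<lambda>m. if m \<in> PAM_REACH then 1 else (0::nat))"
  obtain P0 where P0: "\<forall>n. rec_eval P0 [n] (chi n)" using d unfolding decidable_def chi_def by auto
  have "rcf 1 (\<lambda>xs. chi (xs ! 0))"
    unfolding rcf_def
  proof (intro exI allI impI)
    fix xs :: "nat list" assume "length xs = 1"
    then obtain y where "xs = [y]" by (auto simp: length_Suc_conv)
    then show "rec_eval P0 xs (chi (xs ! 0))" using P0 by simp
  qed
  from rcf_Dfun[OF this] obtain f where f: "\<forall>xs. length xs = 1 \<longrightarrow> rec_eval f xs (Dfun chi (xs ! 0))"
    unfolding rcf_def by auto
  have "rec_eval f [n] (if n \<in> TDS then 1 else 0)" for n
    using f[rule_format, of "[n]"] Dfun_correct[of n] unfolding chi_def by simp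
  then have "decidable TDS" unfolding decidable_def by blast
  then show False using nd by simp
qed

end
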